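(* If $R=X^\dagger X$ with $X=\bigoplus_k(I_{\mathcal H_k}\otimes X_k)\in\mathcal A'_G$ is extremal in $\mathcal C_{K_0}$ and $S=\{k:X_k\ne0\}$, then $\sum_{k\in S}\operatorname{rank}(X_k)^2\le\dim(\mathcal H)^2$.
   Context: Let $\mathcal H,\mathcal K$ be finite-dimensional Hilbert spaces and $g\mapsto U_g$, $g\mapsto V_g$ unitary representations of a group $G$ on $\mathcal H$ and $\mathcal K$; $U_g^*$ is the complex conjugate in a fixed basis. Decompose $\mathcal K\otimes\mathcal H=\bigoplus_k(\mathcal H_k\otimes\mathbb C^{m_k})$ according to the equivalence classes $k$ of irreducible components of $V_g\otimes U_g^*$ (irreducible space $\mathcal H_k$, multiplicity $m_k$). The commutant $\mathcal A'_G$ consists of operators $\bigoplus_k(I_{\mathcal H_k}\otimes M_k)$. Fix $0\le K_0\le I_{\mathcal H}$ and let $\mathcal C_{K_0}=\{R\in\mathcal A'_G: R\ge0,\ \operatorname{Tr}_{\mathcal K}[R]=K_0\}$. *)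

theory Defs
  imports "Jordan_Normal_Form.DL_Rank" "Jordan_Normal_Form.Schur_Decomposition" "HOL-Algebra.Group"
begin

text \<open>Finite-dimensional Hilbert spaces are modelled as C^n; operators as complex matrices.
  The space K (x) H has dimension dK*dH, with basis index a*dH+b for a<dK, b<dH.\<close>

definition kron :: "complex mat \<Rightarrow> complex mat \<Rightarrow> complex mat" where
  "kron A B = mat (dim_row A * dim_row B) (dim_col A * dim_col B)
     (\<lambda>(i,j). A $$ (i div dim_row B, j div dim_col B) * B $$ (i mod dim_row B, j mod dim_col B))"

fun blockdiag :: "nat \<Rightarrow> (nat \<Rightarrow> complex mat) \<Rightarrow> complex mat" where
  "blockdiag 0 B = 0\<^sub>m 0 0"
| "blockdiag (Suc n) B = four_block_mat (blockdiag n B)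
      (0\<^sub>m (dim_row (blockdiag n B)) (dim_col (B n)))
      (0\<^sub>m (dim_row (B n)) (dim_col (blockdiag n B))) (B n)"

definition ptrace_K :: "nat \<Rightarrow> nat \<Rightarrow> complex mat \<Rightarrow> complex mat" where
  "ptrace_K dK dH R = mat dH dH (\<lambda>(b,b'). \<Sum>a<dK. R $$ (a*dH+b, a*dH+b'))"

definition psd :: "nat \<Rightarrow> complex mat \<Rightarrow> bool" where
  "psd n A \<longleftrightarrow> A \<in> carrier_mat n n \<and>
     (\<forall>v\<in>carrier_vec n. Im ((A *\<^sub>v v) \<bullet>c v) = 0 \<and> 0 \<le> Re ((A *\<^sub>v v) \<bullet>c v))"

definition unitary :: "nat \<Rightarrow> complex mat \<Rightarrow> bool" where
  "unitary n U \<longleftrightarrow> U \<in> carrier_mat n n \<and> U * mat_adjoint U = 1\<^sub>m n \<and> mat_adjoint U * U = 1\<^sub>m n"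

definition unitary_rep :: "('g, 'b) monoid_scheme \<Rightarrow> nat \<Rightarrow> ('g \<Rightarrow> complex mat) \<Rightarrow> bool" where
  "unitary_rep G n U \<longleftrightarrow> (\<forall>g\<in>carrier G. unitary n (U g)) \<and>
     (\<forall>g\<in>carrier G. \<forall>h\<in>carrier G. U (g \<otimes>\<^bsub>G\<^esub> h) = U g * U h)"

definition subspace_vec :: "nat \<Rightarrow> complex vec set \<Rightarrow> bool" where
  "subspace_vec n S \<longleftrightarrow> S \<subseteq> carrier_vec n \<and> 0\<^sub>v n \<in> S \<and>
     (\<forall>v\<in>S. \<forall>w\<in>S. v + w \<in> S) \<and> (\<forall>c. \<forall>v\<in>S. c \<cdot>\<^sub>v v \<in> S)"

definition irreducible_rep :: "('g, 'b) monoid_scheme \<Rightarrow> nat \<Rightarrow> ('g \<Rightarrow> complex mat) \<Rightarrow> bool" where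
  "irreducible_rep G n \<pi> \<longleftrightarrow> unitary_rep G n \<pi> \<and> n > 0 \<and>
     (\<forall>S. subspace_vec n S \<and> (\<forall>g\<in>carrier G. \<forall>v\<in>S. \<pi> g *\<^sub>v v \<in> S)
          \<longrightarrow> S = {0\<^sub>v n} \<or> S = carrier_vec n)"

definition equiv_rep :: "('g, 'b) monoid_scheme \<Rightarrow> nat \<Rightarrow> ('g \<Rightarrow> complex mat) \<Rightarrow> nat \<Rightarrow> ('g \<Rightarrow> complex mat) \<Rightarrow> bool" where
  "equiv_rep G n \<pi> n' \<pi>' \<longleftrightarrow> n = n' \<and>
     (\<exists>T\<in>carrier_mat n n. invertible_mat T \<and> (\<forall>g\<in>carrier G. T * \<pi> g = \<pi>' g * T))"

text \<open>The unitary W realises the decomposition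
  K (x) H = (+)_{k<n} H_k (x) C^{m k} of V_g (x) conj(U_g) into
  pairwise inequivalent irreducibles pi k (on H_k = C^{d k}) with multiplicity m k.\<close>
definition isotypic_decomp ::
  "('g, 'b) monoid_scheme \<Rightarrow> nat \<Rightarrow> nat \<Rightarrow> ('g \<Rightarrow> complex mat) \<Rightarrow> ('g \<Rightarrow> complex mat) \<Rightarrow>
   nat \<Rightarrow> (nat \<Rightarrow> nat) \<Rightarrow> (nat \<Rightarrow> nat) \<Rightarrow> (nat \<Rightarrow> 'g \<Rightarrow> complex mat) \<Rightarrow> complex mat \<Rightarrow> bool" where
  "isotypic_decomp G dK dH V U n d m \<pi> W \<longleftrightarrow>
     (\<forall>k<n. irreducible_rep G (d k) (\<pi> k) \<and> m k > 0) \<and>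
     (\<forall>k<n. \<forall>l<n. k \<noteq> l \<longrightarrow> \<not> equiv_rep G (d k) (\<pi> k) (d l) (\<pi> l)) \<and>
     (\<Sum>k<n. d k * m k) = dK * dH \<and>
     unitary (dK * dH) W \<and>
     (\<forall>g\<in>carrier G. kron (V g) (map_mat cnj (U g)) =
        W * blockdiag n (\<lambda>k. kron (\<pi> k g) (1\<^sub>m (m k))) * mat_adjoint W)"

text \<open>The element (+)_k (I_{H_k} (x) M_k) of the commutant, in the original basis.\<close>
definition comm_elem :: "nat \<Rightarrow> (nat \<Rightarrow> nat) \<Rightarrow> complex mat \<Rightarrow> (nat \<Rightarrow> complex mat) \<Rightarrow> complex mat" where
  "comm_elem n d W M = W * blockdiag n (\<lambda>k. kron (1\<^sub>m (d k)) (M k)) * mat_adjoint W"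

definition commutant :: "nat \<Rightarrow> (nat \<Rightarrow> nat) \<Rightarrow> (nat \<Rightarrow> nat) \<Rightarrow> complex mat \<Rightarrow> complex mat set" where
  "commutant n d m W = {comm_elem n d W M | M. \<forall>k<n. M k \<in> carrier_mat (m k) (m k)}"

definition C_set :: "nat \<Rightarrow> nat \<Rightarrow> nat \<Rightarrow> (nat \<Rightarrow> nat) \<Rightarrow> (nat \<Rightarrow> nat) \<Rightarrow> complex mat \<Rightarrow> complex mat \<Rightarrow> complex mat set" where
  "C_set dK dH n d m W K0 = {R \<in> commutant n d m W. psd (dK * dH) R \<and> ptrace_K dK dH R = K0}"

definition extreme_point :: "complex mat set \<Rightarrow> complex mat \<Rightarrow> bool" where
  "extreme_point C R \<longleftrightarrow> R \<in> C \<and>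
     (\<forall>R1\<in>C. \<forall>R2\<in>C. \<forall>t::real. 0 < t \<and> t < 1 \<and> R = of_real t \<cdot>\<^sub>m R1 + of_real (1 - t) \<cdot>\<^sub>m R2
        \<longrightarrow> R1 = R \<and> R2 = R)"

definition mrank :: "complex mat \<Rightarrow> nat" where
  "mrank A = vec_space.rank (dim_row A) A"

end

theory Submission
  imports Defs
begin
abbreviation adj :: "complex mat \<Rightarrow> complex mat" where "adj A \<equiv> mat_adjoint A"

lemma adj_dims[simp]: "dim_row (adj A) = dim_col A" "dim_col (adj A) = dim_row A"
  by (auto simp: mat_adjoint_def mat_of_rows_def)

lemma adj_index[simp]: "i < dim_col A \<Longrightarrow> j < dim_row A \<Longrightarrow> adj A $$ (i,j) = cnj (A $$ (j,i))"
  by (auto simp: mat_adjoint_def mat_of_rows_def)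

lemma adj_carrier[simp]: "A \<in> carrier_mat nr nc \<Longrightarrow> adj A \<in> carrier_mat nc nr"
  by (metis adj_dims carrier_matD carrier_matI)

lemma adj_adj[simp]: "adj (adj A) = A"
  by (rule eq_matI, auto)

lemma adj_mult: assumes "A \<in> carrier_mat a b" "B \<in> carrier_mat b c"
  shows "adj (A * B) = adj B * adj A"
proof (rule eq_matI)
  fix i j assume ij: "i < dim_row (adj B * adj A)" "j < dim_col (adj B * adj A)"
  then show "adj (A * B) $$ (i, j) = (adj B * adj A) $$ (i, j)"
    using assms by (auto simp: scalar_prod_def row_def col_def intro!: sum.cong)
qed (use assms in auto)

lemma adj_add: assumes "A \<in> carrier_mat a b" "B \<in> carrier_mat a b"
  shows "adj (A + B) = adj A + adj B"
  by (rule eq_matI, use assms in auto)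

lemma adj_smult: "adj (c \<cdot>\<^sub>m A) = cnj c \<cdot>\<^sub>m adj A"
  by (rule eq_matI, auto)

lemma adj_zero[simp]: "adj (0\<^sub>m a b) = 0\<^sub>m b a"
  by (rule eq_matI, auto)

lemma adj_one[simp]: "adj (1\<^sub>m a) = 1\<^sub>m a"
  by (rule eq_matI, auto)

lemma adj_vec_lemma: assumes "A \<in> carrier_mat nr nc" "u \<in> carrier_vec nr" "v \<in> carrier_vec nc"
  shows "(adj A *\<^sub>v u) \<bullet>c v = u \<bullet>c (A *\<^sub>v v)"
proof -
  have "(adj A *\<^sub>v u) \<bullet>c v = (\<Sum>j<nc. (\<Sum>i<nr. cnj (A $$ (i,j)) * u $ i) * cnj (v $ j))"
    using assms by (auto simp: scalar_prod_def row_def atLeast0LessThan intro!: sum.cong)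
  also have "\<dots> = (\<Sum>j<nc. \<Sum>i<nr. u $ i * cnj (A $$ (i,j) * v $ j))"
    by (simp add: sum_distrib_left sum_distrib_right mult_ac)
  also have "\<dots> = (\<Sum>i<nr. \<Sum>j<nc. u $ i * cnj (A $$ (i,j) * v $ j))"
    by (rule sum.swap)
  also have "\<dots> = (\<Sum>i<nr. u $ i * cnj (\<Sum>j<nc. A $$ (i,j) * v $ j))"
    by (simp add: sum_distrib_left)
  also have "\<dots> = u \<bullet>c (A *\<^sub>v v)"
    using assms unfolding scalar_prod_def by (simp add: atLeast0LessThan scalar_prod_def row_def)
  finally show ?thesis .
qed

lemma sum_split_prod: fixes f :: "nat \<Rightarrow> complex" shows "(\<Sum>p<d*s. f p) = (\<Sum>q<d. \<Sum>u<s. f (q*s+u))"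
proof (induct d)
  case 0 then show ?case by simp
next
  case (Suc d)
  have "(\<Sum>p<Suc d*s. f p) = (\<Sum>p\<in>{0..<d*s}. f p) + (\<Sum>p\<in>{d*s..<d*s+s}. f p)"
    by (subst sum.atLeastLessThan_concat) (auto simp: atLeast0LessThan add.commute)
  also have "(\<Sum>p\<in>{d*s..<d*s+s}. f p) = (\<Sum>u<s. f (d*s+u))"
    using sum.shift_bounds_nat_ivl[of f 0 "d*s" s] by (simp add: atLeast0LessThan add.commute)
  finally show ?case using Suc by (simp add: atLeast0LessThan)
qed

lemma kron_dims[simp]: "dim_row (kron A B) = dim_row A * dim_row B" "dim_col (kron A B) = dim_col A * dim_col B"
  by (auto simp: kron_def)

lemma kron_carrier[simp]: "B \<in> carrier_mat r c \<Longrightarrow> kron (1\<^sub>m d) B \<in> carrier_mat (d*r) (d*c)"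
  by (metis kron_dims carrier_matD carrier_matI index_one_mat(2,3))

lemma kron_index: assumes "i < d * dim_row A" "j < d * dim_col A"
  shows "kron (1\<^sub>m d) A $$ (i,j) = (if i div dim_row A = j div dim_col A then A $$ (i mod dim_row A, j mod dim_col A) else 0)"
proof -
  have "i div dim_row A < d" "j div dim_col A < d" using assms
    by (metis less_mult_imp_div_less mult.commute)+
  then show ?thesis using assms by (simp add: kron_def)
qed

lemma kron_mult: assumes A: "A \<in> carrier_mat r s" and B: "B \<in> carrier_mat s t"
  shows "kron (1\<^sub>m d) A * kron (1\<^sub>m d) B = kron (1\<^sub>m d) (A * B)"
proof (rule eq_matI)
  fix i j assume "i < dim_row (kron (1\<^sub>m d) (A * B))" "j < dim_col (kron (1\<^sub>m d) (A * B))"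
  then have i: "i < d * r" and j: "j < d * t" using A B by auto
  have ir: "i div r < d" "i mod r < r" using i
    by (metis less_mult_imp_div_less mult.commute, metis i mod_less_divisor mult_0_right not_gr_zero not_less_zero)
  have jt: "j div t < d" "j mod t < t" using j
    by (metis less_mult_imp_div_less mult.commute, metis j mod_less_divisor mult_0_right not_gr_zero not_less_zero)
  have "(kron (1\<^sub>m d) A * kron (1\<^sub>m d) B) $$ (i,j) = (\<Sum>p<d*s. kron (1\<^sub>m d) A $$ (i,p) * kron (1\<^sub>m d) B $$ (p,j))"
    using i j A B by (simp add: scalar_prod_def atLeast0LessThan)
  also have "\<dots> = (\<Sum>q<d. \<Sum>u<s. kron (1\<^sub>m d) A $$ (i,q*s+u) * kron (1\<^sub>m d) B $$ (q*s+u,j))"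
    by (rule sum_split_prod)
  also have "\<dots> = (\<Sum>q<d. if q = i div r then (if q = j div t then (\<Sum>u<s. A $$ (i mod r, u) * B $$ (u, j mod t)) else 0) else 0)"
  proof (rule sum.cong[OF refl])
    fix q assume q: "q \<in> {..<d}"
    have "(\<Sum>u<s. kron (1\<^sub>m d) A $$ (i,q*s+u) * kron (1\<^sub>m d) B $$ (q*s+u,j))
        = (\<Sum>u<s. if q = i div r then (if q = j div t then A $$ (i mod r, u) * B $$ (u, j mod t) else 0) else 0)"
    proof (rule sum.cong[OF refl])
      fix u assume u: "u \<in> {..<s}"
      have qs: "q*s+u < d*s" using q u
        by (metis add.commute lessThan_iff mult.commute mult_Suc_right nat_add_left_cancel_less
            order_less_le_trans not_less_eq_eq le_trans mult_le_mono1 less_eq_Suc_le)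
      have dv: "(q*s+u) div s = q" "(q*s+u) mod s = u" using u by auto
      show "kron (1\<^sub>m d) A $$ (i,q*s+u) * kron (1\<^sub>m d) B $$ (q*s+u,j) =
         (if q = i div r then (if q = j div t then A $$ (i mod r, u) * B $$ (u, j mod t) else 0) else 0)"
        using A B i j qs u by (simp add: kron_index dv)
    qed
    then show "(\<Sum>u<s. kron (1\<^sub>m d) A $$ (i,q*s+u) * kron (1\<^sub>m d) B $$ (q*s+u,j))
        = (if q = i div r then (if q = j div t then (\<Sum>u<s. A $$ (i mod r, u) * B $$ (u, j mod t)) else 0) else 0)"
      by simp
  qed
  also have "\<dots> = (if i div r = j div t then (\<Sum>u<s. A $$ (i mod r, u) * B $$ (u, j mod t)) else 0)"
    using ir by (simp add: sum.delta' if_distrib[symmetric] cong: if_cong)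
  also have "\<dots> = kron (1\<^sub>m d) (A * B) $$ (i,j)"
    using A B i j ir jt by (simp add: kron_index scalar_prod_def atLeast0LessThan)
  finally show "(kron (1\<^sub>m d) A * kron (1\<^sub>m d) B) $$ (i,j) = kron (1\<^sub>m d) (A * B) $$ (i,j)" .
qed (use A B in auto)

lemma kron_adj: "adj (kron (1\<^sub>m d) A) = kron (1\<^sub>m d) (adj A)"
proof (rule eq_matI)
  fix i j assume "i < dim_row (kron (1\<^sub>m d) (adj A))" "j < dim_col (kron (1\<^sub>m d) (adj A))"
  then have i: "i < d * dim_col A" and j: "j < d * dim_row A" by auto
  have "i mod dim_col A < dim_col A" "j mod dim_row A < dim_row A" using i j
    by (metis mod_less_divisor mult_0_right not_gr_zero not_less_zero)+
  then show "adj (kron (1\<^sub>m d) A) $$ (i,j) = kron (1\<^sub>m d) (adj A) $$ (i,j)"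
    using i j by (auto simp: kron_index)
qed auto

lemma kron_add: assumes "A \<in> carrier_mat r c" "B \<in> carrier_mat r c"
  shows "kron (1\<^sub>m d) (A + B) = kron (1\<^sub>m d) A + kron (1\<^sub>m d) B"
proof (rule eq_matI)
  fix i j assume "i < dim_row (kron (1\<^sub>m d) A + kron (1\<^sub>m d) B)" "j < dim_col (kron (1\<^sub>m d) A + kron (1\<^sub>m d) B)"
  then have i: "i < d * r" and j: "j < d * c" using assms by auto
  have "i mod r < r" "j mod c < c" using i j
    by (metis mod_less_divisor mult_0_right not_gr_zero not_less_zero)+
  then show "kron (1\<^sub>m d) (A + B) $$ (i,j) = (kron (1\<^sub>m d) A + kron (1\<^sub>m d) B) $$ (i,j)"
    using i j assms by (auto simp: kron_index)
qed (use assms in auto)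

lemma kron_smult: "kron (1\<^sub>m d) (a \<cdot>\<^sub>m A) = a \<cdot>\<^sub>m kron (1\<^sub>m d) A"
proof (rule eq_matI)
  fix i j assume "i < dim_row (a \<cdot>\<^sub>m kron (1\<^sub>m d) A)" "j < dim_col (a \<cdot>\<^sub>m kron (1\<^sub>m d) A)"
  then have i: "i < d * dim_row A" and j: "j < d * dim_col A" by auto
  have "i mod dim_row A < dim_row A" "j mod dim_col A < dim_col A" using i j
    by (metis mod_less_divisor mult_0_right not_gr_zero not_less_zero)+
  then show "kron (1\<^sub>m d) (a \<cdot>\<^sub>m A) $$ (i,j) = (a \<cdot>\<^sub>m kron (1\<^sub>m d) A) $$ (i,j)"
    using i j by (auto simp: kron_index)
qed auto

lemma kron_zero_imp: assumes "A \<in> carrier_mat r c" "d > 0" "kron (1\<^sub>m d) A = 0\<^sub>m (d*r) (d*c)"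
  shows "A = 0\<^sub>m r c"
proof (rule eq_matI)
  fix i j assume ij: "i < dim_row (0\<^sub>m r c)" "j < dim_col (0\<^sub>m r c)"
  then have i: "i < d * r" and j: "j < d * c" using assms(2)
    by (auto, metis less_le_trans mult_le_mono1 mult_1 less_one not_less)+
  have "kron (1\<^sub>m d) A $$ (i,j) = A $$ (i,j)" using i j ij assms(1) by (auto simp: kron_index)
  then show "A $$ (i,j) = 0\<^sub>m r c $$ (i,j)" using assms(3) ij i j by auto
qed (use assms in auto)

lemma bd_carrier: assumes "\<And>k. k < n \<Longrightarrow> M k \<in> carrier_mat (a k) (b k)"
  shows "blockdiag n M \<in> carrier_mat (\<Sum>k<n. a k) (\<Sum>k<n. b k)"
  using assms
proof (induct n)
  case 0 then show ?case by simp
next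
  case (Suc n)
  then have IH: "blockdiag n M \<in> carrier_mat (\<Sum>k<n. a k) (\<Sum>k<n. b k)" by simp
  have Mn: "M n \<in> carrier_mat (a n) (b n)" using Suc by simp
  show ?case using four_block_carrier_mat[OF IH Mn] by simp
qed

lemma bd_cong: "(\<And>k. k < n \<Longrightarrow> M k = M' k) \<Longrightarrow> blockdiag n M = blockdiag n M'"
  by (induct n) auto

lemma bd_mult: assumes A: "\<And>k. k < n \<Longrightarrow> A k \<in> carrier_mat (a k) (b k)"
  and B: "\<And>k. k < n \<Longrightarrow> B k \<in> carrier_mat (b k) (c k)"
  shows "blockdiag n A * blockdiag n B = blockdiag n (\<lambda>k. A k * B k)"
  using A B
proof (induct n)
  case 0 then show ?case by simp
next
  case (Suc n)
  have IH: "blockdiag n A * blockdiag n B = blockdiag n (\<lambda>k. A k * B k)" using Suc by simp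
  have cA: "blockdiag n A \<in> carrier_mat (\<Sum>k<n. a k) (\<Sum>k<n. b k)" by (rule bd_carrier, use Suc in simp)
  have cB: "blockdiag n B \<in> carrier_mat (\<Sum>k<n. b k) (\<Sum>k<n. c k)" by (rule bd_carrier, use Suc in simp)
  have cAB: "blockdiag n (\<lambda>k. A k * B k) \<in> carrier_mat (\<Sum>k<n. a k) (\<Sum>k<n. c k)"
    by (rule bd_carrier) (metis Suc.prems less_SucI mult_carrier_mat)
  have An: "A n \<in> carrier_mat (a n) (b n)" and Bn: "B n \<in> carrier_mat (b n) (c n)" using Suc by auto
  have dA: "dim_row (blockdiag n A) = (\<Sum>k<n. a k)" "dim_col (blockdiag n A) = (\<Sum>k<n. b k)" using cA by auto
  have dB: "dim_row (blockdiag n B) = (\<Sum>k<n. b k)" "dim_col (blockdiag n B) = (\<Sum>k<n. c k)" using cB by auto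
  have dAB: "dim_row (blockdiag n (\<lambda>k. A k * B k)) = (\<Sum>k<n. a k)" using cAB by auto
  have dn: "dim_row (A n) = a n" "dim_col (A n) = b n" "dim_row (B n) = b n" "dim_col (B n) = c n"
    using An Bn by auto
  have "blockdiag (Suc n) A * blockdiag (Suc n) B =
    four_block_mat (blockdiag n A * blockdiag n B + 0\<^sub>m (\<Sum>k<n. a k) (b n) * 0\<^sub>m (b n) (\<Sum>k<n. c k))
      (blockdiag n A * 0\<^sub>m (\<Sum>k<n. b k) (c n) + 0\<^sub>m (\<Sum>k<n. a k) (b n) * B n)
      (0\<^sub>m (a n) (\<Sum>k<n. b k) * blockdiag n B + A n * 0\<^sub>m (b n) (\<Sum>k<n. c k))
      (0\<^sub>m (a n) (\<Sum>k<n. b k) * 0\<^sub>m (\<Sum>k<n. b k) (c n) + A n * B n)"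
    unfolding blockdiag.simps dA dB dn
    by (rule mult_four_block_mat[OF cA _ _ An cB _ _ Bn]) auto
  also have "\<dots> = blockdiag (Suc n) (\<lambda>k. A k * B k)"
    unfolding blockdiag.simps dAB IH using cA cB An Bn cAB
    by (simp add: dn)
  finally show ?case .
qed

lemma adj_four_block: assumes "A \<in> carrier_mat r1 c1" "B \<in> carrier_mat r1 c2" "C \<in> carrier_mat r2 c1" "D \<in> carrier_mat r2 c2"
  shows "adj (four_block_mat A B C D) = four_block_mat (adj A) (adj C) (adj B) (adj D)"
proof -
  have d: "dim_row A = r1" "dim_col A = c1" "dim_row B = r1" "dim_col B = c2"
    "dim_row C = r2" "dim_col C = c1" "dim_row D = r2" "dim_col D = c2" using assms by auto
  show ?thesis
    by (rule eq_matI) (auto simp: d)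
qed

lemma bd_adj: assumes A: "\<And>k. k < n \<Longrightarrow> A k \<in> carrier_mat (a k) (b k)"
  shows "adj (blockdiag n A) = blockdiag n (\<lambda>k. adj (A k))"
  using A
proof (induct n)
  case 0 then show ?case by (simp add: eq_matI)
next
  case (Suc n)
  have IH: "adj (blockdiag n A) = blockdiag n (\<lambda>k. adj (A k))" using Suc by simp
  have cA: "blockdiag n A \<in> carrier_mat (\<Sum>k<n. a k) (\<Sum>k<n. b k)" by (rule bd_carrier, use Suc in simp)
  have cA': "blockdiag n (\<lambda>k. adj (A k)) \<in> carrier_mat (\<Sum>k<n. b k) (\<Sum>k<n. a k)" by (rule bd_carrier, use Suc in simp)
  have An: "A n \<in> carrier_mat (a n) (b n)" using Suc by auto
  have d: "dim_row (blockdiag n A) = (\<Sum>k<n. a k)" "dim_col (blockdiag n A) = (\<Sum>k<n. b k)"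
     "dim_row (blockdiag n (\<lambda>k. adj (A k))) = (\<Sum>k<n. b k)"
     "dim_col (blockdiag n (\<lambda>k. adj (A k))) = (\<Sum>k<n. a k)" "dim_row (A n) = a n" "dim_col (A n) = b n"
    using cA cA' An by auto
  show ?case unfolding blockdiag.simps d
    by (subst adj_four_block[OF cA _ _ An]) (auto simp: IH d)
qed

lemma bd_add: assumes A: "\<And>k. k < n \<Longrightarrow> A k \<in> carrier_mat (a k) (b k)"
  and B: "\<And>k. k < n \<Longrightarrow> B k \<in> carrier_mat (a k) (b k)"
  shows "blockdiag n (\<lambda>k. A k + B k) = blockdiag n A + blockdiag n B"
  using A B
proof (induct n)
  case 0 then show ?case by (simp add: eq_matI)
next
  case (Suc n)
  have IH: "blockdiag n (\<lambda>k. A k + B k) = blockdiag n A + blockdiag n B" using Suc by simp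
  have cA: "blockdiag n A \<in> carrier_mat (\<Sum>k<n. a k) (\<Sum>k<n. b k)" by (rule bd_carrier, use Suc in simp)
  have cB: "blockdiag n B \<in> carrier_mat (\<Sum>k<n. a k) (\<Sum>k<n. b k)" by (rule bd_carrier, use Suc in simp)
  have cAB: "blockdiag n (\<lambda>k. A k + B k) \<in> carrier_mat (\<Sum>k<n. a k) (\<Sum>k<n. b k)" by (rule bd_carrier, use Suc in simp)
  have An: "A n \<in> carrier_mat (a n) (b n)" and Bn: "B n \<in> carrier_mat (a n) (b n)" using Suc by auto
  have d: "dim_row (blockdiag n A) = (\<Sum>k<n. a k)" "dim_col (blockdiag n A) = (\<Sum>k<n. b k)"
     "dim_row (blockdiag n B) = (\<Sum>k<n. a k)" "dim_col (blockdiag n B) = (\<Sum>k<n. b k)"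
     "dim_row (blockdiag n (\<lambda>k. A k + B k)) = (\<Sum>k<n. a k)"
     "dim_row (A n) = a n" "dim_col (A n) = b n" "dim_row (B n) = a n" "dim_col (B n) = b n"
    using cA cB cAB An Bn by auto
  show ?case unfolding blockdiag.simps d
    by (subst add_four_block_mat[OF cA _ _ An cB _ _ Bn]) (auto simp: IH d)
qed

lemma bd_smult: assumes A: "\<And>k. k < n \<Longrightarrow> A k \<in> carrier_mat (a k) (b k)"
  shows "blockdiag n (\<lambda>k. x \<cdot>\<^sub>m A k) = x \<cdot>\<^sub>m blockdiag n A"
  using A
proof (induct n)
  case 0 then show ?case by (simp add: eq_matI)
next
  case (Suc n)
  have IH: "blockdiag n (\<lambda>k. x \<cdot>\<^sub>m A k) = x \<cdot>\<^sub>m blockdiag n A" using Suc by simp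
  have cA: "blockdiag n A \<in> carrier_mat (\<Sum>k<n. a k) (\<Sum>k<n. b k)" by (rule bd_carrier, use Suc in simp)
  have An: "A n \<in> carrier_mat (a n) (b n)" using Suc by auto
  have d: "dim_row (blockdiag n A) = (\<Sum>k<n. a k)" "dim_col (blockdiag n A) = (\<Sum>k<n. b k)"
     "dim_row (A n) = a n" "dim_col (A n) = b n"
    using cA An by auto
  show ?case unfolding blockdiag.simps d
    by (subst smult_four_block_mat[OF cA _ _ An]) (auto simp: IH d)
qed

lemma four_block_zero_imp: assumes "A \<in> carrier_mat r1 c1" "D \<in> carrier_mat r2 c2"
  "four_block_mat A B C D = 0\<^sub>m (r1+r2) (c1+c2)"
  shows "A = 0\<^sub>m r1 c1" "D = 0\<^sub>m r2 c2"
proof -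
  have d: "dim_row A = r1" "dim_col A = c1" "dim_row D = r2" "dim_col D = c2" using assms by auto
  show "A = 0\<^sub>m r1 c1"
  proof (rule eq_matI)
    fix i j assume "i < dim_row (0\<^sub>m r1 c1)" "j < dim_col (0\<^sub>m r1 c1)"
    then have i: "i < r1" and j: "j < c1" by auto
    have "four_block_mat A B C D $$ (i,j) = A $$ (i,j)" using i j by (simp add: d)
    then show "A $$ (i,j) = 0\<^sub>m r1 c1 $$ (i,j)" using assms(3) i j by simp
  qed (auto simp: d)
  show "D = 0\<^sub>m r2 c2"
  proof (rule eq_matI)
    fix i j assume "i < dim_row (0\<^sub>m r2 c2)" "j < dim_col (0\<^sub>m r2 c2)"
    then have i: "i < r2" and j: "j < c2" by auto
    have "four_block_mat A B C D $$ (i+r1,j+c1) = D $$ (i,j)" using i j by (simp add: d)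
    then show "D $$ (i,j) = 0\<^sub>m r2 c2 $$ (i,j)" using assms(3) i j by simp
  qed (auto simp: d)
qed

lemma bd_zero_imp: assumes A: "\<And>k. k < n \<Longrightarrow> A k \<in> carrier_mat (a k) (b k)"
  and "blockdiag n A = 0\<^sub>m (\<Sum>k<n. a k) (\<Sum>k<n. b k)" and "k < n"
  shows "A k = 0\<^sub>m (a k) (b k)"
  using assms
proof (induct n)
  case 0 then show ?case by simp
next
  case (Suc n)
  have cA: "blockdiag n A \<in> carrier_mat (\<Sum>k<n. a k) (\<Sum>k<n. b k)" by (rule bd_carrier, use Suc in simp)
  have An: "A n \<in> carrier_mat (a n) (b n)" using Suc by auto
  have z: "four_block_mat (blockdiag n A) (0\<^sub>m (dim_row (blockdiag n A)) (dim_col (A n)))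
      (0\<^sub>m (dim_row (A n)) (dim_col (blockdiag n A))) (A n) = 0\<^sub>m ((\<Sum>k<n. a k) + a n) ((\<Sum>k<n. b k) + b n)"
    using Suc(3) by simp
  note zz = four_block_zero_imp[OF cA An z]
  show ?case
  proof (cases "k = n")
    case True then show ?thesis using zz by simp
  next
    case False then show ?thesis using Suc zz by simp
  qed
qed

definition BB :: "nat \<Rightarrow> (nat \<Rightarrow> nat) \<Rightarrow> (nat \<Rightarrow> complex mat) \<Rightarrow> complex mat" where
  "BB n d M = blockdiag n (\<lambda>k. kron (1\<^sub>m (d k)) (M k))"

lemma ce_BB: "comm_elem n d W M = W * BB n d M * adj W"
  by (simp add: comm_elem_def BB_def)

context
  fixes n N :: nat and d m :: "nat \<Rightarrow> nat" and W :: "complex mat"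
  assumes N: "N = (\<Sum>k<n. d k * m k)"
    and W: "W \<in> carrier_mat N N" and WW: "adj W * W = 1\<^sub>m N" and WW': "W * adj W = 1\<^sub>m N"
begin

lemma BB_carrier: "(\<And>k. k < n \<Longrightarrow> M k \<in> carrier_mat (m k) (m k)) \<Longrightarrow> BB n d M \<in> carrier_mat N N"
  unfolding BB_def N by (rule bd_carrier) (rule kron_carrier, auto)

lemma ce_carrier: "(\<And>k. k < n \<Longrightarrow> M k \<in> carrier_mat (m k) (m k)) \<Longrightarrow> comm_elem n d W M \<in> carrier_mat N N"
  unfolding ce_BB using BB_carrier W by (meson adj_carrier mult_carrier_mat)

lemma BB_mult: assumes "\<And>k. k < n \<Longrightarrow> A k \<in> carrier_mat (m k) (m k)" "\<And>k. k < n \<Longrightarrow> B k \<in> carrier_mat (m k) (m k)"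
  shows "BB n d A * BB n d B = BB n d (\<lambda>k. A k * B k)"
proof -
  have "BB n d A * BB n d B = blockdiag n (\<lambda>k. kron (1\<^sub>m (d k)) (A k) * kron (1\<^sub>m (d k)) (B k))"
    unfolding BB_def by (rule bd_mult[of _ _ "\<lambda>k. d k * m k" "\<lambda>k. d k * m k" _ "\<lambda>k. d k * m k"]) (use assms in auto)
  also have "\<dots> = BB n d (\<lambda>k. A k * B k)"
    unfolding BB_def by (rule bd_cong) (use assms kron_mult in blast)
  finally show ?thesis .
qed

lemma WWX: "X \<in> carrier_mat N c \<Longrightarrow> adj W * (W * X) = X"
proof -
  assume X: "X \<in> carrier_mat N c"
  have "adj W * (W * X) = (adj W * W) * X" using X W by (simp add: assoc_mult_mat[of _ N N _ N _ c])
  then show ?thesis using X by (simp add: WW)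
qed

lemma ce_mult: assumes A: "\<And>k. k < n \<Longrightarrow> A k \<in> carrier_mat (m k) (m k)" and B: "\<And>k. k < n \<Longrightarrow> B k \<in> carrier_mat (m k) (m k)"
  shows "comm_elem n d W A * comm_elem n d W B = comm_elem n d W (\<lambda>k. A k * B k)"
proof -
  have cA: "BB n d A \<in> carrier_mat N N" and cB: "BB n d B \<in> carrier_mat N N"
    using BB_carrier A B by auto
  have aW: "adj W \<in> carrier_mat N N" using W by simp
  have "comm_elem n d W A * comm_elem n d W B = W * (BB n d A * (adj W * (W * (BB n d B * adj W))))"
    unfolding ce_BB using cA cB W aW by (simp add: assoc_mult_mat[of _ N N _ N _ N] mult_carrier_mat)
  also have "\<dots> = W * ((BB n d A * BB n d B) * adj W)"
    using cA cB W aW by (simp add: WWX[of _ N] assoc_mult_mat[of _ N N _ N _ N] mult_carrier_mat)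
  also have "\<dots> = comm_elem n d W (\<lambda>k. A k * B k)"
    unfolding ce_BB BB_mult[OF A B] using cA cB W aW
    by (simp add: assoc_mult_mat[of _ N N _ N _ N] mult_carrier_mat BB_mult[OF A B, symmetric])
  finally show ?thesis .
qed

lemma ce_adj: assumes A: "\<And>k. k < n \<Longrightarrow> A k \<in> carrier_mat (m k) (m k)"
  shows "adj (comm_elem n d W A) = comm_elem n d W (\<lambda>k. adj (A k))"
proof -
  have cA: "BB n d A \<in> carrier_mat N N" using BB_carrier A by auto
  have aW: "adj W \<in> carrier_mat N N" using W by simp
  have "adj (BB n d A) = BB n d (\<lambda>k. adj (A k))"
  proof -
    have "adj (BB n d A) = blockdiag n (\<lambda>k. adj (kron (1\<^sub>m (d k)) (A k)))"
      unfolding BB_def by (rule bd_adj[of _ _ "\<lambda>k. d k * m k" "\<lambda>k. d k * m k"]) (use A in auto)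
    then show ?thesis unfolding BB_def kron_adj .
  qed
  then show ?thesis unfolding ce_BB using cA W aW
    by (simp add: adj_mult[of _ N N _ N] assoc_mult_mat[of _ N N _ N _ N] mult_carrier_mat)
qed

lemma ce_add: assumes A: "\<And>k. k < n \<Longrightarrow> A k \<in> carrier_mat (m k) (m k)" and B: "\<And>k. k < n \<Longrightarrow> B k \<in> carrier_mat (m k) (m k)"
  shows "comm_elem n d W (\<lambda>k. A k + B k) = comm_elem n d W A + comm_elem n d W B"
proof -
  have cA: "BB n d A \<in> carrier_mat N N" and cB: "BB n d B \<in> carrier_mat N N"
    using BB_carrier A B by auto
  have aW: "adj W \<in> carrier_mat N N" using W by simp
  have "BB n d (\<lambda>k. A k + B k) = blockdiag n (\<lambda>k. kron (1\<^sub>m (d k)) (A k) + kron (1\<^sub>m (d k)) (B k))"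
    unfolding BB_def by (rule bd_cong) (use A B kron_add in blast)
  also have "\<dots> = BB n d A + BB n d B"
    unfolding BB_def by (rule bd_add[of _ _ "\<lambda>k. d k * m k" "\<lambda>k. d k * m k"]) (use A B in auto)
  finally have e: "BB n d (\<lambda>k. A k + B k) = BB n d A + BB n d B" .
  show ?thesis unfolding ce_BB e
    using mult_add_distrib_mat[OF W cA cB] add_mult_distrib_mat[OF mult_carrier_mat[OF W cA] mult_carrier_mat[OF W cB] aW]
    by simp
qed

lemma ce_smult: assumes A: "\<And>k. k < n \<Longrightarrow> A k \<in> carrier_mat (m k) (m k)"
  shows "comm_elem n d W (\<lambda>k. x \<cdot>\<^sub>m A k) = x \<cdot>\<^sub>m comm_elem n d W A"
proof -
  have cA: "BB n d A \<in> carrier_mat N N" using BB_carrier A by auto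
  have aW: "adj W \<in> carrier_mat N N" using W by simp
  have "BB n d (\<lambda>k. x \<cdot>\<^sub>m A k) = blockdiag n (\<lambda>k. x \<cdot>\<^sub>m kron (1\<^sub>m (d k)) (A k))"
    unfolding BB_def by (rule bd_cong) (simp add: kron_smult)
  also have "\<dots> = x \<cdot>\<^sub>m BB n d A"
    unfolding BB_def by (rule bd_smult[of _ _ "\<lambda>k. d k * m k" "\<lambda>k. d k * m k"]) (use A in auto)
  finally have e: "BB n d (\<lambda>k. x \<cdot>\<^sub>m A k) = x \<cdot>\<^sub>m BB n d A" .
  show ?thesis unfolding ce_BB e
    using mult_smult_distrib[OF W cA] mult_smult_assoc_mat[OF mult_carrier_mat[OF W cA] aW]
    by simp
qed

lemma ce_zero_imp: assumes A: "\<And>k. k < n \<Longrightarrow> A k \<in> carrier_mat (m k) (m k)"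
  and dpos: "\<And>k. k < n \<Longrightarrow> d k > 0"
  and z: "comm_elem n d W A = 0\<^sub>m N N" and k: "k < n"
  shows "A k = 0\<^sub>m (m k) (m k)"
proof -
  have cA: "BB n d A \<in> carrier_mat N N" using BB_carrier A by auto
  have aW: "adj W \<in> carrier_mat N N" using W by simp
  have "adj W * comm_elem n d W A * W = adj W * (W * (BB n d A * (adj W * W)))"
    unfolding ce_BB using cA W aW by (simp add: assoc_mult_mat[of _ N N _ N _ N] mult_carrier_mat)
  also have "\<dots> = BB n d A" using cA by (simp add: WW WWX[of _ N])
  finally have "BB n d A = adj W * comm_elem n d W A * W" by simp
  also have "\<dots> = 0\<^sub>m N N" using z W aW by simp
  finally have "blockdiag n (\<lambda>k. kron (1\<^sub>m (d k)) (A k)) = 0\<^sub>m (\<Sum>k<n. d k * m k) (\<Sum>k<n. d k * m k)"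
    unfolding BB_def N .
  then have "kron (1\<^sub>m (d k)) (A k) = 0\<^sub>m (d k * m k) (d k * m k)"
    by (rule bd_zero_imp[rotated]) (use A k in auto)
  then show ?thesis using kron_zero_imp A k dpos by blast
qed

end

lemma idx_lt: "a < dK \<Longrightarrow> b < dH \<Longrightarrow> a*dH+b < dK*(dH::nat)"
proof -
  assume "a < dK" "b < dH"
  then have "a*dH + b < a*dH + dH" by simp
  also have "\<dots> = Suc a * dH" by simp
  also have "\<dots> \<le> dK * dH" using \<open>a < dK\<close> by (intro mult_le_mono1) simp
  finally show ?thesis .
qed

lemma pt_carrier[simp]: "ptrace_K dK dH R \<in> carrier_mat dH dH"
  by (simp add: ptrace_K_def)

lemma pt_add: assumes "A \<in> carrier_mat (dK*dH) (dK*dH)" "B \<in> carrier_mat (dK*dH) (dK*dH)"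
  shows "ptrace_K dK dH (A + B) = ptrace_K dK dH A + ptrace_K dK dH B"
  by (rule eq_matI) (use assms idx_lt in \<open>auto simp: ptrace_K_def sum.distrib\<close>)

lemma pt_smult: assumes "A \<in> carrier_mat (dK*dH) (dK*dH)"
  shows "ptrace_K dK dH (c \<cdot>\<^sub>m A) = c \<cdot>\<^sub>m ptrace_K dK dH A"
  by (rule eq_matI) (use assms idx_lt in \<open>auto simp: ptrace_K_def sum_distrib_left\<close>)

lemma pt_adj: assumes "A \<in> carrier_mat (dK*dH) (dK*dH)"
  shows "ptrace_K dK dH (adj A) = adj (ptrace_K dK dH A)"
  by (rule eq_matI) (use assms idx_lt in \<open>auto simp: ptrace_K_def\<close>)

lemma pt_zero: "ptrace_K dK dH (0\<^sub>m (dK*dH) (dK*dH)) = 0\<^sub>m dH dH"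
  by (rule eq_matI) (use idx_lt in \<open>auto simp: ptrace_K_def\<close>)

lemma cprod_conj: assumes "u \<in> carrier_vec n" "w \<in> carrier_vec n"
  shows "u \<bullet>c w = cnj (w \<bullet>c u)"
  using assms by (simp add: scalar_prod_def mult.commute)

lemma herm_quad_Im: assumes A: "A \<in> carrier_mat n n" and h: "adj A = A" and v: "v \<in> carrier_vec n"
  shows "Im ((A *\<^sub>v v) \<bullet>c v) = 0"
proof -
  have "(A *\<^sub>v v) \<bullet>c v = (adj A *\<^sub>v v) \<bullet>c v" using h by simp
  also have "\<dots> = v \<bullet>c (A *\<^sub>v v)" by (rule adj_vec_lemma[OF A v v])
  also have "\<dots> = cnj ((A *\<^sub>v v) \<bullet>c v)" by (rule cprod_conj) (use A v in auto)
  finally have "(A *\<^sub>v v) \<bullet>c v = cnj ((A *\<^sub>v v) \<bullet>c v)" .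
  then show ?thesis by (metis cnj.simps(2) neg_equal_zero)
qed

lemma self_cprod: assumes "v \<in> carrier_vec n"
  shows "v \<bullet>c v = of_real (\<Sum>i<n. (cmod (v$i))^2)"
proof -
  have "v \<bullet>c v = (\<Sum>i<n. v$i * cnj (v$i))" using assms by (simp add: scalar_prod_def atLeast0LessThan)
  also have "\<dots> = (\<Sum>i<n. of_real ((cmod (v$i))^2))"
    by (intro sum.cong refl) (metis complex_norm_square of_real_power)
  finally show ?thesis by simp
qed

lemma quad_bound: assumes Z: "Z \<in> carrier_mat n n" and w: "w \<in> carrier_vec n"
  shows "cmod ((Z *\<^sub>v w) \<bullet>c w) \<le> (\<Sum>i<n. \<Sum>j<n. cmod (Z$$(i,j))) * (\<Sum>i<n. (cmod (w$i))^2)"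
proof -
  define s where "s = (\<Sum>i<n. (cmod (w$i))^2)"
  have s0: "0 \<le> s" unfolding s_def by (intro sum_nonneg) auto
  have wi: "cmod (w$i) \<le> sqrt s" if "i < n" for i
  proof -
    have "(cmod (w$i))^2 \<le> s" unfolding s_def
      by (rule member_le_sum[of i "{..<n}" "\<lambda>i. (cmod (w$i))^2"]) (use that in auto)
    then show ?thesis by (simp add: real_le_rsqrt)
  qed
  have wij: "cmod (w$i) * cmod (w$j) \<le> s" if "i < n" "j < n" for i j
  proof -
    have "cmod (w$i) * cmod (w$j) \<le> sqrt s * sqrt s"
      using wi that s0 by (intro mult_mono) auto
    then show ?thesis using s0 by simp
  qed
  have "(Z *\<^sub>v w) \<bullet>c w = (\<Sum>i<n. (\<Sum>j<n. Z$$(i,j) * w$j) * cnj (w$i))"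
    using Z w by (simp add: scalar_prod_def atLeast0LessThan)
  also have "\<dots> = (\<Sum>i<n. \<Sum>j<n. Z$$(i,j) * w$j * cnj (w$i))"
    by (simp add: sum_distrib_right)
  finally have e: "(Z *\<^sub>v w) \<bullet>c w = (\<Sum>i<n. \<Sum>j<n. Z$$(i,j) * w$j * cnj (w$i))" .
  have "cmod ((Z *\<^sub>v w) \<bullet>c w) \<le> (\<Sum>i<n. cmod (\<Sum>j<n. Z$$(i,j) * w$j * cnj (w$i)))"
    unfolding e by (rule norm_sum)
  also have "\<dots> \<le> (\<Sum>i<n. \<Sum>j<n. cmod (Z$$(i,j) * w$j * cnj (w$i)))"
    by (intro sum_mono norm_sum)
  also have "\<dots> \<le> (\<Sum>i<n. \<Sum>j<n. cmod (Z$$(i,j)) * s)"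
  proof (intro sum_mono)
    fix i j assume "i \<in> {..<n}" "j \<in> {..<n}"
    then have "cmod (w$j) * cmod (w$i) \<le> s" using wij by auto
    then show "cmod (Z$$(i,j) * w$j * cnj (w$i)) \<le> cmod (Z$$(i,j)) * s"
      by (simp add: norm_mult mult.assoc mult_left_mono)
  qed
  also have "\<dots> = (\<Sum>i<n. \<Sum>j<n. cmod (Z$$(i,j))) * s"
    by (simp add: sum_distrib_right)
  finally show ?thesis unfolding s_def .
qed

lemma smult_mat_vec': assumes "Z \<in> carrier_mat n n" "w \<in> carrier_vec n"
  shows "(c \<cdot>\<^sub>m Z) *\<^sub>v w = c \<cdot>\<^sub>v (Z *\<^sub>v w)"
  by (rule eq_vecI) (use assms in \<open>auto simp: scalar_prod_def sum_distrib_left mult.assoc\<close>)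

lemma psd_pert: assumes X: "X \<in> carrier_mat n n" and Z: "Z \<in> carrier_mat n n" and h: "adj Z = Z"
  and e0: "0 \<le> e" and e1: "e * (\<Sum>i<n. \<Sum>j<n. cmod (Z$$(i,j))) \<le> 1"
  shows "psd n (adj X * (1\<^sub>m n + of_real e \<cdot>\<^sub>m Z) * X)"
proof -
  let ?H = "1\<^sub>m n + of_real e \<cdot>\<^sub>m Z"
  have H: "?H \<in> carrier_mat n n" using Z by simp
  have hH: "adj ?H = ?H" using Z h by (simp add: adj_add[of _ n n] adj_smult)
  have aX: "adj X \<in> carrier_mat n n" using X by simp
  show ?thesis unfolding psd_def
  proof (intro conjI ballI)
    show "adj X * ?H * X \<in> carrier_mat n n" using X H aX by (meson mult_carrier_mat)
    fix v :: "complex vec" assume v: "v \<in> carrier_vec n"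
    define w where "w = X *\<^sub>v v"
    have w: "w \<in> carrier_vec n" unfolding w_def using X v by simp
    have "(adj X * ?H * X *\<^sub>v v) \<bullet>c v = (adj X *\<^sub>v (?H *\<^sub>v w)) \<bullet>c v"
      unfolding w_def using assoc_mult_mat_vec[OF mult_carrier_mat[OF aX H] X v]
        assoc_mult_mat_vec[OF aX H, of "X *\<^sub>v v"] w[unfolded w_def] by simp
    also have "\<dots> = (?H *\<^sub>v w) \<bullet>c w" unfolding w_def
      by (rule adj_vec_lemma[OF X _ v]) (use H w w_def in simp)
    finally have q: "(adj X * ?H * X *\<^sub>v v) \<bullet>c v = (?H *\<^sub>v w) \<bullet>c w" .
    show "Im ((adj X * ?H * X *\<^sub>v v) \<bullet>c v) = 0" unfolding q by (rule herm_quad_Im[OF H hH w])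
    have "?H *\<^sub>v w = w + of_real e \<cdot>\<^sub>v (Z *\<^sub>v w)"
      using Z w by (simp add: add_mult_distrib_mat_vec[of _ n n] smult_mat_vec')
    then have "(?H *\<^sub>v w) \<bullet>c w = w \<bullet>c w + of_real e * ((Z *\<^sub>v w) \<bullet>c w)"
      using Z w by (simp add: add_scalar_prod_distrib[of _ n])
    then have "Re ((?H *\<^sub>v w) \<bullet>c w) = (\<Sum>i<n. (cmod (w$i))^2) + e * Re ((Z *\<^sub>v w) \<bullet>c w)"
      using self_cprod[OF w] by simp
    moreover have "e * Re ((Z *\<^sub>v w) \<bullet>c w) \<ge> - (e * ((\<Sum>i<n. \<Sum>j<n. cmod (Z$$(i,j))) * (\<Sum>i<n. (cmod (w$i))^2)))"
    proof -
      have "\<bar>Re ((Z *\<^sub>v w) \<bullet>c w)\<bar> \<le> (\<Sum>i<n. \<Sum>j<n. cmod (Z$$(i,j))) * (\<Sum>i<n. (cmod (w$i))^2)"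
        using quad_bound[OF Z w] abs_Re_le_cmod order_trans by blast
      then have "- ((\<Sum>i<n. \<Sum>j<n. cmod (Z$$(i,j))) * (\<Sum>i<n. (cmod (w$i))^2)) \<le> Re ((Z *\<^sub>v w) \<bullet>c w)" by linarith
      then show ?thesis using e0 by (metis minus_mult_right mult_left_mono)
    qed
    moreover have "e * ((\<Sum>i<n. \<Sum>j<n. cmod (Z$$(i,j))) * (\<Sum>i<n. (cmod (w$i))^2)) \<le> (\<Sum>i<n. (cmod (w$i))^2)"
    proof -
      have "0 \<le> (\<Sum>i<n. (cmod (w$i))^2)" by (intro sum_nonneg) auto
      then have "(e * (\<Sum>i<n. \<Sum>j<n. cmod (Z$$(i,j)))) * (\<Sum>i<n. (cmod (w$i))^2) \<le> 1 * (\<Sum>i<n. (cmod (w$i))^2)"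
        using e1 by (intro mult_right_mono) auto
      then show ?thesis by (simp add: mult.assoc)
    qed
    ultimately show "0 \<le> Re ((adj X * ?H * X *\<^sub>v v) \<bullet>c v)" unfolding q by linarith
  qed
qed

lemma lin_dep_mats: fixes F :: "'t \<Rightarrow> complex mat"
  assumes T: "finite T" and F: "\<And>t. t \<in> T \<Longrightarrow> F t \<in> carrier_mat a b" and card: "card T > a * b"
  shows "\<exists>c. (\<exists>t\<in>T. c t \<noteq> 0) \<and> (\<forall>i<a. \<forall>j<b. (\<Sum>t\<in>T. c t * F t $$ (i,j)) = 0)"
proof -
  define N where "N = card T"
  obtain g where g: "bij_betw g {0..<N} T" using ex_bij_betw_nat_finite[OF T] unfolding N_def by blast
  define A :: "complex mat" where "A = mat N N (\<lambda>(r,s). if r < a*b then F (g s) $$ (r div b, r mod b) else 0)"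
  have A: "A \<in> carrier_mat N N" unfolding A_def by simp
  have "det A = (\<Sum>j<N. A $$ (a*b,j) * cofactor A (a*b) j)"
    by (rule laplace_expansion_row[OF A]) (use card N_def in simp)
  also have "\<dots> = 0" using card unfolding N_def A_def by simp
  finally have "det A = 0" .
  then obtain v where v: "v \<in> carrier_vec N" "v \<noteq> 0\<^sub>v N" "A *\<^sub>v v = 0\<^sub>v N"
    using det_0_iff_vec_prod_zero_field[OF A] by blast
  define c where "c = (\<lambda>t. v $ (inv_into {0..<N} g t))"
  have inv: "inv_into {0..<N} g (g s) = s" if "s < N" for s
    using g that by (simp add: bij_betw_def inv_into_f_f)
  have ex: "\<exists>t\<in>T. c t \<noteq> 0"
  proof -
    obtain s where s: "s < N" "v $ s \<noteq> 0" using v(1,2) by (metis carrier_vecD eq_vecI index_zero_vec)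
    have "g s \<in> T" using g s by (auto simp: bij_betw_def)
    moreover have "c (g s) \<noteq> 0" unfolding c_def using inv s by simp
    ultimately show ?thesis by blast
  qed
  have "(\<Sum>t\<in>T. c t * F t $$ (i,j)) = 0" if ij: "i < a" "j < b" for i j
  proof -
    have r: "i*b+j < a*b" using idx_lt ij by blast
    then have rN: "i*b+j < N" using card N_def by simp
    have dm: "(i*b+j) div b = i" "(i*b+j) mod b = j" using ij by auto
    have "(\<Sum>t\<in>T. c t * F t $$ (i,j)) = (\<Sum>s\<in>{0..<N}. c (g s) * F (g s) $$ (i,j))"
      using sum.reindex_bij_betw[OF g, of "\<lambda>t. c t * F t $$ (i,j)"] by simp
    also have "\<dots> = (\<Sum>s\<in>{0..<N}. A $$ (i*b+j, s) * v $ s)"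
      by (intro sum.cong refl) (use r rN inv dm in \<open>auto simp: A_def c_def\<close>)
    also have "\<dots> = (A *\<^sub>v v) $ (i*b+j)"
      using A v(1) rN by (simp add: scalar_prod_def)
    also have "\<dots> = 0" using v rN by simp
    finally show ?thesis .
  qed
  then show ?thesis using ex by blast
qed

lemma comb_lin:
  fixes \<Phi> :: "(nat \<Rightarrow> complex mat) \<Rightarrow> complex mat" and F :: "'t \<Rightarrow> nat \<Rightarrow> complex mat"
  assumes T: "finite T"
    and add: "\<And>A B. (\<And>k. k < n \<Longrightarrow> A k \<in> carrier_mat (m k) (m k)) \<Longrightarrow> (\<And>k. k < n \<Longrightarrow> B k \<in> carrier_mat (m k) (m k))
       \<Longrightarrow> \<Phi> (\<lambda>k. A k + B k) = \<Phi> A + \<Phi> B"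
    and sm: "\<And>A x. (\<And>k. k < n \<Longrightarrow> A k \<in> carrier_mat (m k) (m k)) \<Longrightarrow> \<Phi> (\<lambda>k. x \<cdot>\<^sub>m A k) = x \<cdot>\<^sub>m \<Phi> A"
    and cong: "\<And>A B. (\<And>k. k < n \<Longrightarrow> A k = B k) \<Longrightarrow> \<Phi> A = \<Phi> B"
    and car: "\<And>A. (\<And>k. k < n \<Longrightarrow> A k \<in> carrier_mat (m k) (m k)) \<Longrightarrow> \<Phi> A \<in> carrier_mat p q"
    and zero: "\<Phi> (\<lambda>k. 0\<^sub>m (m k) (m k)) = 0\<^sub>m p q"
    and F: "\<And>t k. t \<in> T \<Longrightarrow> k < n \<Longrightarrow> F t k \<in> carrier_mat (m k) (m k)"
    and ij: "i < p" "j < q"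
  shows "\<Phi> (\<lambda>k. mat (m k) (m k) (\<lambda>rs. \<Sum>t\<in>T. c t * F t k $$ rs)) $$ (i,j) = (\<Sum>t\<in>T. c t * \<Phi> (F t) $$ (i,j))"
  using T F
proof (induct T rule: finite_induct)
  case empty
  have "\<Phi> (\<lambda>k. mat (m k) (m k) (\<lambda>rs. \<Sum>t\<in>{}. c t * F t k $$ rs)) = \<Phi> (\<lambda>k. 0\<^sub>m (m k) (m k))"
    by (rule cong) (auto intro!: eq_matI)
  then show ?case using zero ij by simp
next
  case (insert t T)
  let ?C = "\<lambda>T k. mat (m k) (m k) (\<lambda>rs. \<Sum>t\<in>T. c t * F t k $$ rs)"
  have Ft: "\<And>k. k < n \<Longrightarrow> F t k \<in> carrier_mat (m k) (m k)" using insert by auto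
  have CT: "\<And>k. k < n \<Longrightarrow> ?C T k \<in> carrier_mat (m k) (m k)" by simp
  have "\<Phi> (?C (insert t T)) = \<Phi> (\<lambda>k. c t \<cdot>\<^sub>m F t k + ?C T k)"
  proof (rule cong)
    fix k assume k: "k < n"
    show "?C (insert t T) k = c t \<cdot>\<^sub>m F t k + ?C T k"
      by (rule eq_matI) (use insert Ft[OF k] in \<open>auto\<close>)
  qed
  also have "\<dots> = \<Phi> (\<lambda>k. c t \<cdot>\<^sub>m F t k) + \<Phi> (?C T)"
    by (rule add) (use Ft in auto)
  also have "\<Phi> (\<lambda>k. c t \<cdot>\<^sub>m F t k) = c t \<cdot>\<^sub>m \<Phi> (F t)" by (rule sm) (use Ft in auto)
  finally have e: "\<Phi> (?C (insert t T)) = c t \<cdot>\<^sub>m \<Phi> (F t) + \<Phi> (?C T)" .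
  have c1: "\<Phi> (F t) \<in> carrier_mat p q" by (rule car) (rule Ft)
  have c2: "\<Phi> (?C T) \<in> carrier_mat p q" by (rule car) simp
  have IH: "\<Phi> (?C T) $$ (i,j) = (\<Sum>t\<in>T. c t * \<Phi> (F t) $$ (i,j))" using insert by auto
  show ?case unfolding e using c1 c2 ij IH insert(1,2) by simp
qed

lemma rank_indep_cols: fixes X :: "complex mat" assumes X: "X \<in> carrier_mat m m"
  shows "\<exists>J. J \<subseteq> {..<m} \<and> card J = mrank X \<and>
     (\<forall>u\<in>carrier_vec m. (\<forall>p<m. p \<notin> J \<longrightarrow> u$p = 0) \<longrightarrow> X *\<^sub>v u = 0\<^sub>v m \<longrightarrow> u = 0\<^sub>v m)"
proof -
  interpret vs: vec_space "TYPE(complex)" m .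
  have mr: "mrank X = vs.rank X" unfolding mrank_def using X by simp
  obtain S where max: "maximal S (\<lambda>T. T \<subseteq> set (cols X) \<and> vs.lin_indpt T)"
    using maximal_exists[of "(\<lambda>T. T \<subseteq> set (cols X) \<and> vs.lin_indpt T)" "card (set (cols X))" "{}"]
    by (meson List.finite_set card_mono empty_iff empty_subsetI vs.finite_lin_indpt2 rev_finite_subset)
  have rk: "vs.rank X = card S" by (rule vs.rank_card_indpt[OF X max])
  have SX: "S \<subseteq> set (cols X)" and li: "vs.lin_indpt S" using max unfolding maximal_def by auto
  have finS: "finite S" using SX finite_subset by blast
  have Scar: "S \<subseteq> carrier_vec m" using SX X cols_dim by blast
  have exj: "\<exists>j. j < m \<and> col X j = v" if "v \<in> S" for v
  proof -
    have "v \<in> set (cols X)" using that SX by blast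
    then obtain j where "j < length (cols X)" "cols X ! j = v" by (metis in_set_conv_nth)
    then show ?thesis using X by auto
  qed
  define jj where "jj v = (SOME j. j < m \<and> col X j = v)" for v
  have jj: "jj v < m" "col X (jj v) = v" if "v \<in> S" for v
    using someI_ex[OF exj[OF that]] unfolding jj_def by auto
  have inj: "inj_on jj S" by (metis inj_onI jj(2))
  define J where "J = jj ` S"
  have J1: "J \<subseteq> {..<m}" using jj unfolding J_def by auto
  have J2: "card J = mrank X" unfolding J_def mr rk using card_image[OF inj] .
  have J3: "u = 0\<^sub>v m" if u: "u \<in> carrier_vec m" and sup: "\<forall>p<m. p \<notin> J \<longrightarrow> u$p = 0"
     and z: "X *\<^sub>v u = 0\<^sub>v m" for u
  proof -
    define a where "a v = u $ (jj v)" for v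
    have lc: "vs.lincomb a S = X *\<^sub>v u"
    proof (rule eq_vecI)
      show "dim_vec (vs.lincomb a S) = dim_vec (X *\<^sub>v u)" using X Scar finS by (simp add: vs.lincomb_dim)
      fix i assume "i < dim_vec (X *\<^sub>v u)"
      then have i: "i < m" using X by simp
      have "(X *\<^sub>v u) $ i = (\<Sum>p\<in>{0..<m}. X $$ (i,p) * u $ p)"
        using X u i by (simp add: scalar_prod_def)
      also have "\<dots> = (\<Sum>p\<in>J. X $$ (i,p) * u $ p)"
        by (rule sum.mono_neutral_right) (use J1 sup in auto)
      also have "\<dots> = (\<Sum>v\<in>S. X $$ (i, jj v) * u $ (jj v))"
        unfolding J_def by (rule sum.reindex[OF inj, unfolded comp_def])
      also have "\<dots> = (\<Sum>v\<in>S. a v * v $ i)"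
      proof (intro sum.cong refl)
        fix v assume v: "v \<in> S"
        have "v $ i = X $$ (i, jj v)" using jj[OF v] X i by (metis carrier_matD(1) col_def index_vec index_col carrier_matD(2))
        then show "X $$ (i, jj v) * u $ (jj v) = a v * v $ i" unfolding a_def by simp
      qed
      also have "\<dots> = vs.lincomb a S $ i" by (rule vs.lincomb_index[symmetric, OF i Scar])
      finally show "vs.lincomb a S $ i = (X *\<^sub>v u) $ i" by simp
    qed
    have "a \<in> S \<rightarrow> {0}"
      using vs.not_lindepD[OF li finS subset_refl _ ] lc z by auto
    then have "u $ p = 0" if "p < m" for p
      using sup that unfolding J_def a_def by (cases "p \<in> jj ` S") auto
    then show ?thesis using u by (intro eq_vecI) auto
  qed
  show ?thesis using J1 J2 J3 by blast
qed

lemma ce_cong: "(\<And>k. k < n \<Longrightarrow> A k = B k) \<Longrightarrow> comm_elem n d W A = comm_elem n d W B"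
  unfolding comm_elem_def by (metis (no_types, lifting) bd_cong)

lemma mul3_add: fixes X A B Y :: "complex mat" assumes "X \<in> carrier_mat a b" "A \<in> carrier_mat b b" "B \<in> carrier_mat b b" "Y \<in> carrier_mat b c"
  shows "X * (A + B) * Y = X * A * Y + X * B * Y"
proof -
  have "X * (A + B) = X * A + X * B" by (rule mult_add_distrib_mat[OF assms(1-3)])
  moreover have "(X * A + X * B) * Y = X * A * Y + X * B * Y"
    by (rule add_mult_distrib_mat[OF mult_carrier_mat[OF assms(1,2)] mult_carrier_mat[OF assms(1,3)] assms(4)])
  ultimately show ?thesis by simp
qed

lemma mul3_smult: fixes X A Y :: "complex mat" assumes "X \<in> carrier_mat a b" "A \<in> carrier_mat b b" "Y \<in> carrier_mat b c"
  shows "X * (x \<cdot>\<^sub>m A) * Y = x \<cdot>\<^sub>m (X * A * Y)"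
  using mult_smult_distrib[OF assms(1,2)] mult_smult_assoc_mat[OF mult_carrier_mat[OF assms(1,2)] assms(3)]
  by simp

lemma mul3_adj: assumes "X \<in> carrier_mat a b" "A \<in> carrier_mat b b" "Y \<in> carrier_mat b c"
  shows "adj (X * A * Y) = adj Y * adj A * adj X"
proof -
  have "adj (X * A * Y) = adj Y * adj (X * A)" by (rule adj_mult[OF mult_carrier_mat[OF assms(1,2)] assms(3)])
  also have "adj (X * A) = adj A * adj X" by (rule adj_mult[OF assms(1,2)])
  finally show ?thesis
    using assms by (simp add: assoc_mult_mat[of _ c b _ b _ a])
qed

context
  fixes n N dK dH :: nat and d m :: "nat \<Rightarrow> nat" and W :: "complex mat" and Xk :: "nat \<Rightarrow> complex mat"
  assumes NK: "N = dK * dH" and N: "N = (\<Sum>k<n. d k * m k)"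
    and W: "W \<in> carrier_mat N N" and WW: "adj W * W = 1\<^sub>m N" and WW': "W * adj W = 1\<^sub>m N"
    and Xk: "\<And>k. k < n \<Longrightarrow> Xk k \<in> carrier_mat (m k) (m k)"
begin

definition Phi :: "(nat \<Rightarrow> complex mat) \<Rightarrow> complex mat" where
  "Phi Y = ptrace_K dK dH (comm_elem n d W (\<lambda>k. adj (Xk k) * Y k * Xk k))"

lemma E_car: "k < n \<Longrightarrow> Y \<in> carrier_mat (m k) (m k) \<Longrightarrow> adj (Xk k) * Y * Xk k \<in> carrier_mat (m k) (m k)"
  using Xk by (meson adj_carrier mult_carrier_mat)

lemma CE_car: "(\<And>k. k < n \<Longrightarrow> A k \<in> carrier_mat (m k) (m k)) \<Longrightarrow> comm_elem n d W A \<in> carrier_mat (dK*dH) (dK*dH)"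
  using ce_carrier[OF N W WW WW'] NK by metis

lemma Phi_add: assumes A: "\<And>k. k < n \<Longrightarrow> A k \<in> carrier_mat (m k) (m k)" and B: "\<And>k. k < n \<Longrightarrow> B k \<in> carrier_mat (m k) (m k)"
  shows "Phi (\<lambda>k. A k + B k) = Phi A + Phi B"
proof -
  have "comm_elem n d W (\<lambda>k. adj (Xk k) * (A k + B k) * Xk k)
      = comm_elem n d W (\<lambda>k. adj (Xk k) * A k * Xk k + adj (Xk k) * B k * Xk k)"
    by (rule ce_cong) (rule mul3_add[OF adj_carrier[OF Xk] A B Xk])
  also have "\<dots> = comm_elem n d W (\<lambda>k. adj (Xk k) * A k * Xk k) + comm_elem n d W (\<lambda>k. adj (Xk k) * B k * Xk k)"
    by (rule ce_add[OF N W WW WW']) (blast intro: E_car A B)+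
  finally have e: "comm_elem n d W (\<lambda>k. adj (Xk k) * (A k + B k) * Xk k) = comm_elem n d W (\<lambda>k. adj (Xk k) * A k * Xk k) + comm_elem n d W (\<lambda>k. adj (Xk k) * B k * Xk k)" .
  have c1: "comm_elem n d W (\<lambda>k. adj (Xk k) * A k * Xk k) \<in> carrier_mat (dK*dH) (dK*dH)"
    by (rule CE_car) (rule E_car, assumption, rule A, assumption)
  have c2: "comm_elem n d W (\<lambda>k. adj (Xk k) * B k * Xk k) \<in> carrier_mat (dK*dH) (dK*dH)"
    by (rule CE_car) (rule E_car, assumption, rule B, assumption)
  show ?thesis unfolding Phi_def e by (rule pt_add[OF c1 c2])
qed

lemma Phi_smult: assumes A: "\<And>k. k < n \<Longrightarrow> A k \<in> carrier_mat (m k) (m k)"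
  shows "Phi (\<lambda>k. x \<cdot>\<^sub>m A k) = x \<cdot>\<^sub>m Phi A"
proof -
  have "comm_elem n d W (\<lambda>k. adj (Xk k) * (x \<cdot>\<^sub>m A k) * Xk k)
      = comm_elem n d W (\<lambda>k. x \<cdot>\<^sub>m (adj (Xk k) * A k * Xk k))"
    by (rule ce_cong) (rule mul3_smult[OF adj_carrier[OF Xk] A Xk])
  also have "\<dots> = x \<cdot>\<^sub>m comm_elem n d W (\<lambda>k. adj (Xk k) * A k * Xk k)"
    by (rule ce_smult[OF N W WW WW']) (rule E_car, assumption, rule A, assumption)
  finally have e: "comm_elem n d W (\<lambda>k. adj (Xk k) * (x \<cdot>\<^sub>m A k) * Xk k) = x \<cdot>\<^sub>m comm_elem n d W (\<lambda>k. adj (Xk k) * A k * Xk k)" .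
  have c1: "comm_elem n d W (\<lambda>k. adj (Xk k) * A k * Xk k) \<in> carrier_mat (dK*dH) (dK*dH)"
    by (rule CE_car) (rule E_car, assumption, rule A, assumption)
  show ?thesis unfolding Phi_def e by (rule pt_smult[OF c1])
qed

lemma Phi_cong: "(\<And>k. k < n \<Longrightarrow> A k = B k) \<Longrightarrow> Phi A = Phi B"
  unfolding Phi_def by (metis (no_types, lifting) ce_cong)

lemma Phi_car: "Phi A \<in> carrier_mat dH dH"
  unfolding Phi_def by simp

lemma Phi_zero: "Phi (\<lambda>k. 0\<^sub>m (m k) (m k)) = 0\<^sub>m dH dH"
proof -
  have "Phi (\<lambda>k. 0\<^sub>m (m k) (m k)) = Phi (\<lambda>k. 0 \<cdot>\<^sub>m 0\<^sub>m (m k) (m k))"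
    by (rule Phi_cong) auto
  also have "\<dots> = 0 \<cdot>\<^sub>m Phi (\<lambda>k. 0\<^sub>m (m k) (m k))" by (rule Phi_smult) auto
  also have "\<dots> = 0\<^sub>m dH dH"
  proof -
    have c: "Phi (\<lambda>k. 0\<^sub>m (m k) (m k)) \<in> carrier_mat dH dH" by (rule Phi_car)
    show ?thesis by (rule eq_matI) (use c in auto)
  qed
  finally show ?thesis .
qed

lemma Phi_adj: assumes A: "\<And>k. k < n \<Longrightarrow> A k \<in> carrier_mat (m k) (m k)"
  shows "Phi (\<lambda>k. adj (A k)) = adj (Phi A)"
proof -
  have "comm_elem n d W (\<lambda>k. adj (Xk k) * adj (A k) * Xk k)
      = comm_elem n d W (\<lambda>k. adj (adj (Xk k) * A k * Xk k))"
    by (rule ce_cong) (simp add: mul3_adj[OF adj_carrier[OF Xk] A Xk])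
  also have "\<dots> = adj (comm_elem n d W (\<lambda>k. adj (Xk k) * A k * Xk k))"
    by (rule ce_adj[OF N W WW WW', symmetric]) (rule E_car, assumption, rule A, assumption)
  finally have e: "comm_elem n d W (\<lambda>k. adj (Xk k) * adj (A k) * Xk k) = adj (comm_elem n d W (\<lambda>k. adj (Xk k) * A k * Xk k))" .
  have c1: "comm_elem n d W (\<lambda>k. adj (Xk k) * A k * Xk k) \<in> carrier_mat (dK*dH) (dK*dH)"
    by (rule CE_car) (rule E_car, assumption, rule A, assumption)
  show ?thesis unfolding Phi_def e by (rule pt_adj[OF c1])
qed

end

lemma supp_kill: assumes P: "P \<in> carrier_mat m m" and Q: "Q \<in> carrier_mat m m"
  and inj: "\<And>u. u \<in> carrier_vec m \<Longrightarrow> (\<forall>p<m. p \<notin> J \<longrightarrow> u$p = 0) \<Longrightarrow> P *\<^sub>v u = 0\<^sub>v m \<Longrightarrow> u = 0\<^sub>v m"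
  and supp: "\<And>p q. p < m \<Longrightarrow> q < m \<Longrightarrow> p \<notin> J \<Longrightarrow> Q $$ (p,q) = 0"
  and z: "P * Q = 0\<^sub>m m m"
  shows "Q = 0\<^sub>m m m"
proof (rule eq_matI)
  fix i j assume "i < dim_row (0\<^sub>m m m)" "j < dim_col (0\<^sub>m m m)"
  then have i: "i < m" and j: "j < m" by auto
  have c: "col Q j \<in> carrier_vec m" using Q by (metis carrier_matD(1) col_dim)
  have "P *\<^sub>v col Q j = col (P * Q) j" by (rule col_mult2[OF P Q j, symmetric])
  also have "\<dots> = 0\<^sub>v m" using z j by auto
  finally have "col Q j = 0\<^sub>v m" using inj[OF c] supp j Q by auto
  then show "Q $$ (i,j) = 0\<^sub>m m m $$ (i,j)" using i j Q by (metis carrier_matD(1) carrier_matD(2) col_def index_vec index_zero_mat(1) index_zero_vec(1) index_col)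
qed (use Q in auto)

lemma PCP_nonzero: fixes X C :: "complex mat"
  assumes X: "X \<in> carrier_mat m m" and C: "C \<in> carrier_mat m m"
  and indep: "\<And>u. u \<in> carrier_vec m \<Longrightarrow> (\<forall>p<m. p \<notin> J \<longrightarrow> u$p = 0) \<Longrightarrow> X *\<^sub>v u = 0\<^sub>v m \<Longrightarrow> u = 0\<^sub>v m"
  and supp: "\<And>p q. p < m \<Longrightarrow> q < m \<Longrightarrow> C $$ (p,q) \<noteq> 0 \<Longrightarrow> p \<in> J \<and> q \<in> J"
  and Cnz: "C \<noteq> 0\<^sub>m m m"
  shows "adj X * X * C * (adj X * X) \<noteq> 0\<^sub>m m m"
proof
  assume z: "adj X * X * C * (adj X * X) = 0\<^sub>m m m"
  define PP where "PP = adj X * X"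
  have P: "PP \<in> carrier_mat m m" unfolding PP_def using X by (meson adj_carrier mult_carrier_mat)
  have hP: "adj PP = PP" unfolding PP_def using adj_mult[OF adj_carrier[OF X] X] by simp
  have injP: "u = 0\<^sub>v m" if u: "u \<in> carrier_vec m" and s: "\<forall>p<m. p \<notin> J \<longrightarrow> u$p = 0" and Pu: "PP *\<^sub>v u = 0\<^sub>v m" for u
  proof -
    have Xu: "X *\<^sub>v u \<in> carrier_vec m" using X u by simp
    have "(X *\<^sub>v u) \<bullet>c (X *\<^sub>v u) = (adj X *\<^sub>v (X *\<^sub>v u)) \<bullet>c u"
      using adj_vec_lemma[OF X Xu u] by simp
    also have "\<dots> = (PP *\<^sub>v u) \<bullet>c u" unfolding PP_def using X u by (metis adj_carrier assoc_mult_mat_vec)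
    also have "\<dots> = 0" using Pu u by simp
    finally have h: "(X *\<^sub>v u) \<bullet>c (X *\<^sub>v u) = 0" .
    have "complex_of_real (\<Sum>i<m. (cmod ((X *\<^sub>v u)$i))^2) = 0" using h self_cprod[OF Xu] by metis
    then have "(\<Sum>i<m. (cmod ((X *\<^sub>v u)$i))^2) = 0" by (simp only: of_real_eq_0_iff)
    then have "\<forall>i\<in>{..<m}. (cmod ((X *\<^sub>v u)$i))^2 = 0"
      by (subst sum_nonneg_eq_0_iff[symmetric]) auto
    then have "X *\<^sub>v u = 0\<^sub>v m" using X by (intro eq_vecI) auto
    then show ?thesis using indep[OF u s] by simp
  qed
  have CP: "C * PP \<in> carrier_mat m m" using C P by simp
  have z2: "PP * (C * PP) = 0\<^sub>m m m" using z[folded PP_def] P C by (simp add: assoc_mult_mat[of _ m m _ m _ m])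
  have CP0: "C * PP = 0\<^sub>m m m"
  proof (rule supp_kill[OF P CP injP _ z2])
    fix p q assume p: "p < m" and q: "q < m" and pJ: "p \<notin> J"
    have "(C * PP) $$ (p,q) = (\<Sum>r\<in>{0..<m}. C $$ (p,r) * PP $$ (r,q))"
      using C P p q by (simp add: scalar_prod_def)
    also have "\<dots> = 0" using supp p pJ by (intro sum.neutral) fastforce
    finally show "(C * PP) $$ (p,q) = 0" .
  qed
  have "PP * adj C = adj (C * PP)" using adj_mult[OF C P] hP by simp
  also have "\<dots> = 0\<^sub>m m m" using CP0 by simp
  finally have z3: "PP * adj C = 0\<^sub>m m m" .
  have "adj C = 0\<^sub>m m m"
  proof (rule supp_kill[OF P adj_carrier[OF C] injP _ z3])
    fix p q assume p: "p < m" and q: "q < m" and pJ: "p \<notin> J"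
    show "adj C $$ (p,q) = 0" using supp[OF q p] pJ C p q by auto
  qed
  then have "C = 0\<^sub>m m m" by (metis adj_adj adj_zero)
  then show False using Cnz by simp
qed

lemma sum_ind: "finite T \<Longrightarrow> (\<Sum>t\<in>T. c t * (if t = x then 1 else 0)) = (if x \<in> T then c x else (0::complex))"
proof -
  assume T: "finite T"
  have "(\<Sum>t\<in>T. c t * (if t = x then 1 else 0)) = (\<Sum>t\<in>T. if x = t then c x else 0)"
    by (rule sum.cong) auto
  then show ?thesis using T by (simp add: sum.delta)
qed

context
  fixes n N dK dH :: nat and d m :: "nat \<Rightarrow> nat" and W :: "complex mat" and Xk :: "nat \<Rightarrow> complex mat"
  assumes NK: "N = dK * dH" and N: "N = (\<Sum>k<n. d k * m k)"
    and W: "W \<in> carrier_mat N N" and WW: "adj W * W = 1\<^sub>m N" and WW': "W * adj W = 1\<^sub>m N"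
    and Xk: "\<And>k. k < n \<Longrightarrow> Xk k \<in> carrier_mat (m k) (m k)"
begin

abbreviation "PH \<equiv> Phi n dK dH d W Xk"
lemma PH_add: "(\<And>k. k < n \<Longrightarrow> A k \<in> carrier_mat (m k) (m k)) \<Longrightarrow> (\<And>k. k < n \<Longrightarrow> B k \<in> carrier_mat (m k) (m k))
       \<Longrightarrow> PH (\<lambda>k. A k + B k) = PH A + PH B"
  using Xk by (rule Phi_add[OF NK N W WW WW'])
lemma PH_smult: "(\<And>k. k < n \<Longrightarrow> A k \<in> carrier_mat (m k) (m k)) \<Longrightarrow> PH (\<lambda>k. x \<cdot>\<^sub>m A k) = x \<cdot>\<^sub>m PH A"
  using Xk by (rule Phi_smult[OF NK N W WW WW'])
lemma PH_cong: "(\<And>k. k < n \<Longrightarrow> A k = B k) \<Longrightarrow> PH A = PH B"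
  using Xk by (rule Phi_cong[OF NK N W WW WW'])
lemma PH_car: "PH A \<in> carrier_mat dH dH"
  using Xk by (rule Phi_car[OF NK N W WW WW'])
lemma PH_zero: "PH (\<lambda>k. 0\<^sub>m (m k) (m k)) = 0\<^sub>m dH dH"
  using Xk by (rule Phi_zero[OF NK N W WW WW'])
lemma PH_adj: "(\<And>k. k < n \<Longrightarrow> A k \<in> carrier_mat (m k) (m k)) \<Longrightarrow> PH (\<lambda>k. adj (A k)) = adj (PH A)"
  using Xk by (rule Phi_adj[OF NK N W WW WW'])

lemma exists_pert:
  assumes big: "(\<Sum>k\<in>{k. k < n \<and> Xk k \<noteq> 0\<^sub>m (m k) (m k)}. (mrank (Xk k))^2) > dH^2"
  shows "\<exists>Z k0. k0 < n \<and> (\<forall>k<n. Z k \<in> carrier_mat (m k) (m k) \<and> adj (Z k) = Z k) \<and>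
     PH Z = 0\<^sub>m dH dH \<and> adj (Xk k0) * Z k0 * Xk k0 \<noteq> 0\<^sub>m (m k0) (m k0)"
proof -
  define S where "S = {k. k < n \<and> Xk k \<noteq> 0\<^sub>m (m k) (m k)}"
  have "\<forall>k. \<exists>J. k < n \<longrightarrow> (J \<subseteq> {..<m k} \<and> card J = mrank (Xk k) \<and>
     (\<forall>u\<in>carrier_vec (m k). (\<forall>p<m k. p \<notin> J \<longrightarrow> u$p = 0) \<longrightarrow> Xk k *\<^sub>v u = 0\<^sub>v (m k) \<longrightarrow> u = 0\<^sub>v (m k)))"
  proof
    fix k
    show "\<exists>J. k < n \<longrightarrow> (J \<subseteq> {..<m k} \<and> card J = mrank (Xk k) \<and>
     (\<forall>u\<in>carrier_vec (m k). (\<forall>p<m k. p \<notin> J \<longrightarrow> u$p = 0) \<longrightarrow> Xk k *\<^sub>v u = 0\<^sub>v (m k) \<longrightarrow> u = 0\<^sub>v (m k)))"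
    proof (cases "k < n")
      case True
      from rank_indep_cols[OF Xk[OF True]] obtain J where "J \<subseteq> {..<m k} \<and> card J = mrank (Xk k) \<and>
     (\<forall>u\<in>carrier_vec (m k). (\<forall>p<m k. p \<notin> J \<longrightarrow> u$p = 0) \<longrightarrow> Xk k *\<^sub>v u = 0\<^sub>v (m k) \<longrightarrow> u = 0\<^sub>v (m k))" by (elim exE)
      then show ?thesis by (intro exI[of _ J]) simp
    qed simp
  qed
  from choice[OF this] obtain JJ where JJ0: "\<forall>k. k < n \<longrightarrow> JJ k \<subseteq> {..<m k} \<and> card (JJ k) = mrank (Xk k) \<and>
     (\<forall>u\<in>carrier_vec (m k). (\<forall>p<m k. p \<notin> JJ k \<longrightarrow> u$p = 0) \<longrightarrow> Xk k *\<^sub>v u = 0\<^sub>v (m k) \<longrightarrow> u = 0\<^sub>v (m k))"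
    by (elim exE)
  have JJ: "JJ k \<subseteq> {..<m k} \<and> card (JJ k) = mrank (Xk k) \<and>
     (\<forall>u\<in>carrier_vec (m k). (\<forall>p<m k. p \<notin> JJ k \<longrightarrow> u$p = 0) \<longrightarrow> Xk k *\<^sub>v u = 0\<^sub>v (m k) \<longrightarrow> u = 0\<^sub>v (m k))"
    if "k < n" for k using JJ0 that by blast
  define T where "T = Sigma S (\<lambda>k. JJ k \<times> JJ k)"
  have finS: "finite S" unfolding S_def by simp
  have finJ: "finite (JJ k)" if "k \<in> S" for k
  proof -
    have "k < n" using that unfolding S_def by simp
    then have "JJ k \<subseteq> {..<m k}" using JJ by blast
    then show ?thesis by (rule finite_subset) simp
  qed
  have finT: "finite T" unfolding T_def using finS finJ by auto
  have "card T = (\<Sum>k\<in>S. card (JJ k \<times> JJ k))" unfolding T_def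
    by (rule card_SigmaI) (use finS finJ in auto)
  also have "\<dots> = (\<Sum>k\<in>S. (mrank (Xk k))^2)"
    by (rule sum.cong) (use JJ in \<open>auto simp: S_def card_cartesian_product power2_eq_square\<close>)
  finally have cardT: "card T > dH * dH" using big unfolding S_def by (simp add: power2_eq_square)
  define F :: "nat \<times> nat \<times> nat \<Rightarrow> nat \<Rightarrow> complex mat" where
    "F t = (\<lambda>k. mat (m k) (m k) (\<lambda>(p,q). if t = (k,p,q) then 1 else 0))" for t
  define P' where "P' C = PH (\<lambda>k. Xk k * C k * adj (Xk k))" for C
  have inner_car: "Xk k * C * adj (Xk k) \<in> carrier_mat (m k) (m k)" if "k < n" "C \<in> carrier_mat (m k) (m k)" for k C
    using Xk that by (meson adj_carrier mult_carrier_mat)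
  have P'_add: "P' (\<lambda>k. A k + B k) = P' A + P' B" if A: "\<And>k. k < n \<Longrightarrow> A k \<in> carrier_mat (m k) (m k)"
    and B: "\<And>k. k < n \<Longrightarrow> B k \<in> carrier_mat (m k) (m k)" for A B
  proof -
    have "P' (\<lambda>k. A k + B k) = PH (\<lambda>k. Xk k * A k * adj (Xk k) + Xk k * B k * adj (Xk k))"
      unfolding P'_def by (rule PH_cong) (rule mul3_add[OF Xk A B adj_carrier[OF Xk]])
    also have "\<dots> = P' A + P' B" unfolding P'_def
      by (rule PH_add) (blast intro: inner_car A B)+
    finally show ?thesis .
  qed
  have P'_smult: "P' (\<lambda>k. x \<cdot>\<^sub>m A k) = x \<cdot>\<^sub>m P' A" if A: "\<And>k. k < n \<Longrightarrow> A k \<in> carrier_mat (m k) (m k)" for A x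
  proof -
    have "P' (\<lambda>k. x \<cdot>\<^sub>m A k) = PH (\<lambda>k. x \<cdot>\<^sub>m (Xk k * A k * adj (Xk k)))"
      unfolding P'_def by (rule PH_cong) (rule mul3_smult[OF Xk A adj_carrier[OF Xk]])
    also have "\<dots> = x \<cdot>\<^sub>m P' A" unfolding P'_def
      by (rule PH_smult) (blast intro: inner_car A)
    finally show ?thesis .
  qed
  have P'_cong: "P' A = P' B" if "\<And>k. k < n \<Longrightarrow> A k = B k" for A B
    unfolding P'_def by (rule PH_cong) (use that in simp)
  have P'_car: "P' A \<in> carrier_mat dH dH" for A unfolding P'_def by (rule PH_car)
  have P'_zero: "P' (\<lambda>k. 0\<^sub>m (m k) (m k)) = 0\<^sub>m dH dH"
  proof -
    have "P' (\<lambda>k. 0\<^sub>m (m k) (m k)) = PH (\<lambda>k. 0\<^sub>m (m k) (m k))"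
      unfolding P'_def by (rule PH_cong) (metis Xk adj_carrier left_mult_zero_mat right_mult_zero_mat)
    then show ?thesis using PH_zero by simp
  qed
  have Fcar: "F t k \<in> carrier_mat (m k) (m k)" for t k unfolding F_def by simp
  obtain c where c1: "\<exists>t\<in>T. c t \<noteq> 0" and c2: "\<forall>i<dH. \<forall>j<dH. (\<Sum>t\<in>T. c t * P' (F t) $$ (i,j)) = 0"
    using lin_dep_mats[OF finT P'_car cardT] by blast
  define Cc where "Cc = (\<lambda>k. mat (m k) (m k) (\<lambda>rs. \<Sum>t\<in>T. c t * F t k $$ rs))"
  have Cc_car: "Cc k \<in> carrier_mat (m k) (m k)" for k unfolding Cc_def by simp
  have Cc0: "P' Cc = 0\<^sub>m dH dH"
  proof (rule eq_matI)
    fix i j assume "i < dim_row (0\<^sub>m dH dH)" "j < dim_col (0\<^sub>m dH dH)"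
    then have i: "i < dH" and j: "j < dH" by auto
    have "P' Cc $$ (i,j) = (\<Sum>t\<in>T. c t * P' (F t) $$ (i,j))"
      unfolding Cc_def
      by (rule comb_lin[where \<Phi> = P' and m = m and n = n, OF finT P'_add P'_smult P'_cong P'_car P'_zero Fcar i j])
    then show "P' Cc $$ (i,j) = 0\<^sub>m dH dH $$ (i,j)" using c2 i j by simp
  qed (use P'_car[of Cc] in auto)
  have Cc_ent: "Cc k $$ (p,q) = (if (k,p,q) \<in> T then c (k,p,q) else 0)" if "p < m k" "q < m k" for k p q
    unfolding Cc_def F_def using that sum_ind[OF finT, of c "(k,p,q)"] by simp
  obtain t0 where t0: "t0 \<in> T" "c t0 \<noteq> 0" using c1 by blast
  obtain k0 i0 j0 where t0e: "t0 = (k0,i0,j0)" by (cases t0) auto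
  have k0S: "k0 \<in> S" and i0J: "i0 \<in> JJ k0" and j0J: "j0 \<in> JJ k0" using t0 t0e unfolding T_def by auto
  have k0: "k0 < n" using k0S unfolding S_def by simp
  have JJk0: "JJ k0 \<subseteq> {..<m k0}" using JJ[OF k0] by simp
  have i0: "i0 < m k0" and j0: "j0 < m k0" using i0J j0J JJk0 by auto
  have Ccnz: "Cc k0 \<noteq> 0\<^sub>m (m k0) (m k0)"
  proof
    assume "Cc k0 = 0\<^sub>m (m k0) (m k0)"
    then have "Cc k0 $$ (i0,j0) = 0" using i0 j0 by simp
    then show False using Cc_ent[OF i0 j0] t0 t0e by simp
  qed
  have supp: "p \<in> JJ k0 \<and> q \<in> JJ k0" if "p < m k0" "q < m k0" "Cc k0 $$ (p,q) \<noteq> 0" for p q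
    using Cc_ent[OF that(1,2)] that(3) unfolding T_def by (auto split: if_splits)
  have indep: "u = 0\<^sub>v (m k0)" if "u \<in> carrier_vec (m k0)" "\<forall>p<m k0. p \<notin> JJ k0 \<longrightarrow> u$p = 0" "Xk k0 *\<^sub>v u = 0\<^sub>v (m k0)" for u
    using JJ[OF k0] that by blast
  have PCP: "adj (Xk k0) * Xk k0 * Cc k0 * (adj (Xk k0) * Xk k0) \<noteq> 0\<^sub>m (m k0) (m k0)"
    by (rule PCP_nonzero[OF Xk[OF k0] Cc_car indep supp Ccnz])
  define Y where "Y k = Xk k * Cc k * adj (Xk k)" for k
  have Ycar: "Y k \<in> carrier_mat (m k) (m k)" if "k < n" for k unfolding Y_def by (rule inner_car[OF that Cc_car])
  have EY: "adj (Xk k) * Y k * Xk k = adj (Xk k) * Xk k * Cc k * (adj (Xk k) * Xk k)" if k: "k < n" for k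
  proof -
    have X: "Xk k \<in> carrier_mat (m k) (m k)" and aX: "adj (Xk k) \<in> carrier_mat (m k) (m k)"
      and C: "Cc k \<in> carrier_mat (m k) (m k)" using Xk[OF k] Cc_car by auto
    have XC: "Xk k * Cc k \<in> carrier_mat (m k) (m k)" by (rule mult_carrier_mat[OF X C])
    have P: "adj (Xk k) * Xk k \<in> carrier_mat (m k) (m k)" by (rule mult_carrier_mat[OF aX X])
    have CP: "Cc k * (adj (Xk k) * Xk k) \<in> carrier_mat (m k) (m k)" by (rule mult_carrier_mat[OF C P])
    have XCa: "Xk k * Cc k * adj (Xk k) \<in> carrier_mat (m k) (m k)" by (rule mult_carrier_mat[OF XC aX])
    have "adj (Xk k) * (Xk k * Cc k * adj (Xk k)) * Xk k = adj (Xk k) * ((Xk k * Cc k * adj (Xk k)) * Xk k)"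
      by (rule assoc_mult_mat[OF aX XCa X])
    also have "(Xk k * Cc k * adj (Xk k)) * Xk k = Xk k * Cc k * (adj (Xk k) * Xk k)"
      by (rule assoc_mult_mat[OF XC aX X])
    also have "Xk k * Cc k * (adj (Xk k) * Xk k) = Xk k * (Cc k * (adj (Xk k) * Xk k))"
      by (rule assoc_mult_mat[OF X C P])
    also have "adj (Xk k) * (Xk k * (Cc k * (adj (Xk k) * Xk k))) = (adj (Xk k) * Xk k) * (Cc k * (adj (Xk k) * Xk k))"
      by (rule assoc_mult_mat[OF aX X CP, symmetric])
    also have "\<dots> = adj (Xk k) * Xk k * Cc k * (adj (Xk k) * Xk k)"
      by (rule assoc_mult_mat[OF P C P, symmetric])
    finally show ?thesis unfolding Y_def .
  qed
  have EYnz: "adj (Xk k0) * Y k0 * Xk k0 \<noteq> 0\<^sub>m (m k0) (m k0)" using EY[OF k0] PCP by simp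
  have PY: "PH Y = 0\<^sub>m dH dH" using Cc0 unfolding P'_def Y_def .
  have PaY: "PH (\<lambda>k. adj (Y k)) = 0\<^sub>m dH dH" using PH_adj[OF Ycar] PY by simp
  define Y1 where "Y1 k = Y k + adj (Y k)" for k
  define Y2 where "Y2 k = \<i> \<cdot>\<^sub>m Y k + (- \<i>) \<cdot>\<^sub>m adj (Y k)" for k
  have Y1car: "Y1 k \<in> carrier_mat (m k) (m k)" if "k < n" for k unfolding Y1_def using Ycar[OF that] by simp
  have Y2car: "Y2 k \<in> carrier_mat (m k) (m k)" if "k < n" for k unfolding Y2_def using Ycar[OF that] by simp
  have Y1h: "adj (Y1 k) = Y1 k" if "k < n" for k unfolding Y1_def
    using Ycar[OF that] by (simp add: adj_add[of _ "m k" "m k"] comm_add_mat[of _ "m k" "m k"])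
  have Y2h: "adj (Y2 k) = Y2 k" if "k < n" for k unfolding Y2_def
    using Ycar[OF that] by (simp add: adj_add[of _ "m k" "m k"] adj_smult comm_add_mat[of _ "m k" "m k"])
  have PY1: "PH Y1 = 0\<^sub>m dH dH"
  proof -
    have "PH Y1 = PH Y + PH (\<lambda>k. adj (Y k))" unfolding Y1_def
      by (rule PH_add) (use Ycar in auto)
    then show ?thesis using PY PaY by simp
  qed
  have PY2: "PH Y2 = 0\<^sub>m dH dH"
  proof -
    have "PH Y2 = PH (\<lambda>k. \<i> \<cdot>\<^sub>m Y k) + PH (\<lambda>k. (- \<i>) \<cdot>\<^sub>m adj (Y k))" unfolding Y2_def
      by (rule PH_add) (use Ycar in auto)
    also have "PH (\<lambda>k. \<i> \<cdot>\<^sub>m Y k) = \<i> \<cdot>\<^sub>m PH Y" by (rule PH_smult) (use Ycar in auto)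
    also have "PH (\<lambda>k. (- \<i>) \<cdot>\<^sub>m adj (Y k)) = (- \<i>) \<cdot>\<^sub>m PH (\<lambda>k. adj (Y k))" by (rule PH_smult) (use Ycar in auto)
    finally show ?thesis using PY PaY by simp
  qed
  define E where "E = adj (Xk k0) * Y k0 * Xk k0"
  have X0: "Xk k0 \<in> carrier_mat (m k0) (m k0)" using Xk[OF k0] .
  have Ecar: "E \<in> carrier_mat (m k0) (m k0)" unfolding E_def using E_car X0 Ycar[OF k0]
    by (meson adj_carrier mult_carrier_mat)
  have EY1: "adj (Xk k0) * Y1 k0 * Xk k0 = E + adj E" unfolding Y1_def E_def
    using mul3_add[OF adj_carrier[OF X0] Ycar[OF k0] adj_carrier[OF Ycar[OF k0]] X0]
      mul3_adj[OF adj_carrier[OF X0] Ycar[OF k0] X0] by simp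
  have EY2: "adj (Xk k0) * Y2 k0 * Xk k0 = \<i> \<cdot>\<^sub>m E + (- \<i>) \<cdot>\<^sub>m adj E" unfolding Y2_def E_def
    using mul3_add[OF adj_carrier[OF X0] smult_carrier_mat[OF Ycar[OF k0]] smult_carrier_mat[OF adj_carrier[OF Ycar[OF k0]]] X0]
      mul3_adj[OF adj_carrier[OF X0] Ycar[OF k0] X0]
      mul3_smult[OF adj_carrier[OF X0] Ycar[OF k0] X0]
      mul3_smult[OF adj_carrier[OF X0] adj_carrier[OF Ycar[OF k0]] X0] by simp
  have "adj (Xk k0) * Y1 k0 * Xk k0 \<noteq> 0\<^sub>m (m k0) (m k0) \<or> adj (Xk k0) * Y2 k0 * Xk k0 \<noteq> 0\<^sub>m (m k0) (m k0)"
  proof (rule ccontr)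
    assume "\<not> ?thesis"
    then have z1: "E + adj E = 0\<^sub>m (m k0) (m k0)" and z2: "\<i> \<cdot>\<^sub>m E + (- \<i>) \<cdot>\<^sub>m adj E = 0\<^sub>m (m k0) (m k0)"
      using EY1 EY2 by auto
    have "E = 0\<^sub>m (m k0) (m k0)"
    proof (rule eq_matI)
      fix p q assume "p < dim_row (0\<^sub>m (m k0) (m k0))" "q < dim_col (0\<^sub>m (m k0) (m k0))"
      then have p: "p < m k0" and q: "q < m k0" by auto
      have a: "E $$ (p,q) + adj E $$ (p,q) = 0" using arg_cong[OF z1, of "\<lambda>M. M $$ (p,q)"] p q Ecar by simp
      have b: "\<i> * E $$ (p,q) + (- \<i>) * adj E $$ (p,q) = 0" using arg_cong[OF z2, of "\<lambda>M. M $$ (p,q)"] p q Ecar by simp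
      from a have y: "adj E $$ (p,q) = - E $$ (p,q)" by (simp add: eq_neg_iff_add_eq_0 add.commute)
      from b[unfolded y] have "2 * \<i> * E $$ (p,q) = 0" by (simp add: algebra_simps)
      then have "E $$ (p,q) = 0" by simp
      then show "E $$ (p,q) = 0\<^sub>m (m k0) (m k0) $$ (p,q)" using p q by simp
    qed (use Ecar in auto)
    then show False using EYnz unfolding E_def by simp
  qed
  then show ?thesis
  proof
    assume "adj (Xk k0) * Y1 k0 * Xk k0 \<noteq> 0\<^sub>m (m k0) (m k0)"
    then show ?thesis using k0 Y1car Y1h PY1 by blast
  next
    assume "adj (Xk k0) * Y2 k0 * Xk k0 \<noteq> 0\<^sub>m (m k0) (m k0)"
    then show ?thesis using k0 Y2car Y2h PY2 by blast
  qed
qed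

end

theorem mainTheorem13:
  fixes G :: "('g, 'b) monoid_scheme"
    and dK dH n :: nat and U V :: "'g \<Rightarrow> complex mat"
    and d m :: "nat \<Rightarrow> nat" and \<pi> :: "nat \<Rightarrow> 'g \<Rightarrow> complex mat" and W K0 :: "complex mat"
    and Xk :: "nat \<Rightarrow> complex mat"
  assumes "group G"
    and "unitary_rep G dH U" and "unitary_rep G dK V"
    and "isotypic_decomp G dK dH V U n d m \<pi> W"
    and "psd dH K0" and "psd dH (1\<^sub>m dH - K0)"
    and "\<forall>k<n. Xk k \<in> carrier_mat (m k) (m k)"
    and "extreme_point (C_set dK dH n d m W K0)
           (mat_adjoint (comm_elem n d W Xk) * comm_elem n d W Xk)"
  shows "(\<Sum>k\<in>{k. k < n \<and> Xk k \<noteq> 0\<^sub>m (m k) (m k)}. (mrank (Xk k))^2) \<le> dH^2"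
proof (rule ccontr)
  assume neg: "\<not> (\<Sum>k\<in>{k. k < n \<and> Xk k \<noteq> 0\<^sub>m (m k) (m k)}. (mrank (Xk k))^2) \<le> dH^2"
  then have big: "(\<Sum>k\<in>{k. k < n \<and> Xk k \<noteq> 0\<^sub>m (m k) (m k)}. (mrank (Xk k))^2) > dH^2" by simp
  define N where "N = dK * dH"
  have dpos: "\<And>k. k < n \<Longrightarrow> d k > 0" using assms(4) unfolding isotypic_decomp_def irreducible_rep_def by blast
  have Nsum: "N = (\<Sum>k<n. d k * m k)" using assms(4) unfolding isotypic_decomp_def N_def by simp
  have U: "unitary N W" using assms(4) unfolding isotypic_decomp_def N_def by simp
  have W: "W \<in> carrier_mat N N" and WW': "W * adj W = 1\<^sub>m N" and WW: "adj W * W = 1\<^sub>m N"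
    using U unfolding unitary_def by auto
  have Xk: "\<And>k. k < n \<Longrightarrow> Xk k \<in> carrier_mat (m k) (m k)" using assms(7) by blast
  have "\<exists>Z k0. k0 < n \<and> (\<forall>k<n. Z k \<in> carrier_mat (m k) (m k) \<and> adj (Z k) = Z k) \<and>
     Phi n dK dH d W Xk Z = 0\<^sub>m dH dH \<and> adj (Xk k0) * Z k0 * Xk k0 \<noteq> 0\<^sub>m (m k0) (m k0)"
    using Xk big by (rule exists_pert[OF N_def Nsum W WW WW'])
  then obtain Z k0 where k0: "k0 < n" and Zc: "\<And>k. k < n \<Longrightarrow> Z k \<in> carrier_mat (m k) (m k)"
    and Zh: "\<And>k. k < n \<Longrightarrow> adj (Z k) = Z k" and PZ: "Phi n dK dH d W Xk Z = 0\<^sub>m dH dH"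
    and Enz: "adj (Xk k0) * Z k0 * Xk k0 \<noteq> 0\<^sub>m (m k0) (m k0)" by blast
  have PZ': "Phi n dK dH d W Xk Z = ptrace_K dK dH (comm_elem n d W (\<lambda>k. adj (Xk k) * Z k * Xk k))"
    using Xk by (rule Phi_def[OF N_def Nsum W WW WW'])
  define E where "E k = adj (Xk k) * Z k * Xk k" for k
  define Pk where "Pk k = adj (Xk k) * Xk k" for k
  have Ec: "E k \<in> carrier_mat (m k) (m k)" if "k < n" for k unfolding E_def
    using Xk[OF that] Zc[OF that] by (meson adj_carrier mult_carrier_mat)
  have Pc: "Pk k \<in> carrier_mat (m k) (m k)" if "k < n" for k unfolding Pk_def
    using Xk[OF that] by (meson adj_carrier mult_carrier_mat)
  have aXc: "adj (Xk k) \<in> carrier_mat (m k) (m k)" if "k < n" for k using Xk[OF that] by simp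
  have aZc: "adj (Xk k) * Z k \<in> carrier_mat (m k) (m k)" if "k < n" for k
    using Xk[OF that] Zc[OF that] by (meson adj_carrier mult_carrier_mat)
  define Xb where "Xb = comm_elem n d W Xk"
  define Zb where "Zb = comm_elem n d W Z"
  define D where "D = comm_elem n d W E"
  define R where "R = adj Xb * Xb"
  have Xbc: "Xb \<in> carrier_mat N N" unfolding Xb_def using Xk by (rule ce_carrier[OF Nsum W WW WW'])
  have Zbc: "Zb \<in> carrier_mat N N" unfolding Zb_def using Zc by (rule ce_carrier[OF Nsum W WW WW'])
  have Dc: "D \<in> carrier_mat N N" unfolding D_def using Ec by (rule ce_carrier[OF Nsum W WW WW'])
  have aXbc: "adj Xb \<in> carrier_mat N N" using Xbc by simp
  have aXb: "adj Xb = comm_elem n d W (\<lambda>k. adj (Xk k))" unfolding Xb_def using Xk by (rule ce_adj[OF Nsum W WW WW'])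
  have R_eq: "R = comm_elem n d W Pk"
  proof -
    have "R = comm_elem n d W (\<lambda>k. adj (Xk k) * Xk k)" unfolding R_def aXb unfolding Xb_def
      using aXc Xk by (rule ce_mult[OF Nsum W WW WW'])
    then show ?thesis unfolding Pk_def .
  qed
  have D_eq: "adj Xb * Zb * Xb = D"
  proof -
    have "adj Xb * Zb = comm_elem n d W (\<lambda>k. adj (Xk k) * Z k)" unfolding aXb Zb_def
      using aXc Zc by (rule ce_mult[OF Nsum W WW WW'])
    then have "adj Xb * Zb * Xb = comm_elem n d W (\<lambda>k. adj (Xk k) * Z k) * comm_elem n d W Xk" unfolding Xb_def by simp
    also have "\<dots> = comm_elem n d W (\<lambda>k. adj (Xk k) * Z k * Xk k)"
      using aZc Xk by (rule ce_mult[OF Nsum W WW WW'])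
    finally show ?thesis unfolding D_def E_def .
  qed
  have Zbh: "adj Zb = Zb"
  proof -
    have "adj Zb = comm_elem n d W (\<lambda>k. adj (Z k))" unfolding Zb_def using Zc by (rule ce_adj[OF Nsum W WW WW'])
    also have "\<dots> = Zb" unfolding Zb_def by (rule ce_cong) (rule Zh)
    finally show ?thesis .
  qed
  define s where "s = (\<Sum>i<N. \<Sum>j<N. cmod (Zb $$ (i,j)))"
  define e :: real where "e = 1 / (1 + s)"
  have s0: "s \<ge> 0" unfolding s_def by (intro sum_nonneg) auto
  have e0: "e > 0" unfolding e_def using s0 by simp
  have e1: "e * s \<le> 1" unfolding e_def using s0 by simp
  have mZc: "(-1) \<cdot>\<^sub>m Zb \<in> carrier_mat N N" using Zbc by simp
  have mZh: "adj ((-1) \<cdot>\<^sub>m Zb) = (-1) \<cdot>\<^sub>m Zb" using Zbh by (simp add: adj_smult)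
  have ms: "(\<Sum>i<N. \<Sum>j<N. cmod (((-1) \<cdot>\<^sub>m Zb) $$ (i,j))) = s"
    unfolding s_def by (intro sum.cong refl) (use Zbc in simp)
  have psd1: "psd N (adj Xb * (1\<^sub>m N + of_real e \<cdot>\<^sub>m Zb) * Xb)"
    by (rule psd_pert[OF Xbc Zbc Zbh]) (use e0 e1 s_def in auto)
  have psd2: "psd N (adj Xb * (1\<^sub>m N + of_real e \<cdot>\<^sub>m ((-1) \<cdot>\<^sub>m Zb)) * Xb)"
    by (rule psd_pert[OF Xbc mZc mZh]) (use e0 e1 ms in auto)
  have eZc: "of_real e \<cdot>\<^sub>m Zb \<in> carrier_mat N N" using Zbc by simp
  have emZc: "of_real e \<cdot>\<^sub>m ((-1) \<cdot>\<^sub>m Zb) \<in> carrier_mat N N" using Zbc by simp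
  have R1: "adj Xb * (1\<^sub>m N + of_real e \<cdot>\<^sub>m Zb) * Xb = R + of_real e \<cdot>\<^sub>m D"
  proof -
    have "adj Xb * (1\<^sub>m N + of_real e \<cdot>\<^sub>m Zb) * Xb = adj Xb * 1\<^sub>m N * Xb + adj Xb * (of_real e \<cdot>\<^sub>m Zb) * Xb"
      by (rule mul3_add[OF aXbc one_carrier_mat eZc Xbc])
    also have "adj Xb * (of_real e \<cdot>\<^sub>m Zb) * Xb = of_real e \<cdot>\<^sub>m (adj Xb * Zb * Xb)"
      by (rule mul3_smult[OF aXbc Zbc Xbc])
    also have "adj Xb * 1\<^sub>m N = adj Xb" by (rule right_mult_one_mat[OF aXbc])
    finally show ?thesis unfolding R_def D_eq .
  qed
  have R2: "adj Xb * (1\<^sub>m N + of_real e \<cdot>\<^sub>m ((-1) \<cdot>\<^sub>m Zb)) * Xb = R + of_real e \<cdot>\<^sub>m ((-1) \<cdot>\<^sub>m D)"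
  proof -
    have "adj Xb * (1\<^sub>m N + of_real e \<cdot>\<^sub>m ((-1) \<cdot>\<^sub>m Zb)) * Xb = adj Xb * 1\<^sub>m N * Xb + adj Xb * (of_real e \<cdot>\<^sub>m ((-1) \<cdot>\<^sub>m Zb)) * Xb"
      by (rule mul3_add[OF aXbc one_carrier_mat emZc Xbc])
    also have "adj Xb * (of_real e \<cdot>\<^sub>m ((-1) \<cdot>\<^sub>m Zb)) * Xb = of_real e \<cdot>\<^sub>m (adj Xb * ((-1) \<cdot>\<^sub>m Zb) * Xb)"
      by (rule mul3_smult[OF aXbc mZc Xbc])
    also have "adj Xb * ((-1) \<cdot>\<^sub>m Zb) * Xb = (-1) \<cdot>\<^sub>m (adj Xb * Zb * Xb)"
      by (rule mul3_smult[OF aXbc Zbc Xbc])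
    also have "adj Xb * 1\<^sub>m N = adj Xb" by (rule right_mult_one_mat[OF aXbc])
    finally show ?thesis unfolding R_def D_eq .
  qed
  have comm: "R + of_real x \<cdot>\<^sub>m D = comm_elem n d W (\<lambda>k. Pk k + of_real x \<cdot>\<^sub>m E k)" for x :: real
  proof -
    have "comm_elem n d W (\<lambda>k. Pk k + of_real x \<cdot>\<^sub>m E k) = comm_elem n d W Pk + comm_elem n d W (\<lambda>k. of_real x \<cdot>\<^sub>m E k)"
      by (rule ce_add[OF Nsum W WW WW']) (use Pc Ec in auto)
    also have "comm_elem n d W (\<lambda>k. of_real x \<cdot>\<^sub>m E k) = of_real x \<cdot>\<^sub>m D"
      unfolding D_def using Ec by (rule ce_smult[OF Nsum W WW WW'])
    finally show ?thesis unfolding R_eq by simp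
  qed
  have mD: "of_real e \<cdot>\<^sub>m ((-1) \<cdot>\<^sub>m D) = of_real (-e) \<cdot>\<^sub>m D" by (rule eq_matI) auto
  have Rin: "R \<in> C_set dK dH n d m W K0" using assms(8) unfolding extreme_point_def R_def Xb_def by blast
  then have ptR: "ptrace_K dK dH R = K0" unfolding C_set_def by blast
  have Rc: "R \<in> carrier_mat N N" unfolding R_def by (rule mult_carrier_mat[OF aXbc Xbc])
  have ptD: "ptrace_K dK dH D = 0\<^sub>m dH dH" using PZ PZ' unfolding D_def E_def by simp
  have K0c: "K0 \<in> carrier_mat dH dH" using assms(5) unfolding psd_def by blast
  have pt: "ptrace_K dK dH (R + of_real x \<cdot>\<^sub>m D) = K0" for x :: real
  proof -
    have "ptrace_K dK dH (R + of_real x \<cdot>\<^sub>m D) = ptrace_K dK dH R + ptrace_K dK dH (of_real x \<cdot>\<^sub>m D)"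
      by (rule pt_add) (use Rc Dc N_def in simp_all)
    also have "ptrace_K dK dH (of_real x \<cdot>\<^sub>m D) = of_real x \<cdot>\<^sub>m ptrace_K dK dH D"
      by (rule pt_smult) (use Dc N_def in simp)
    finally show ?thesis unfolding ptR ptD using K0c by simp
  qed
  have inC: "R + of_real x \<cdot>\<^sub>m D \<in> C_set dK dH n d m W K0" if "psd (dK * dH) (R + of_real x \<cdot>\<^sub>m D)" for x :: real
  proof -
    have cc: "\<forall>k<n. Pk k + of_real x \<cdot>\<^sub>m E k \<in> carrier_mat (m k) (m k)"
    proof (intro allI impI)
      fix k assume k: "k < n"
      show "Pk k + of_real x \<cdot>\<^sub>m E k \<in> carrier_mat (m k) (m k)"
        by (rule add_carrier_mat[OF smult_carrier_mat[OF Ec[OF k]]])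
    qed
    have "R + of_real x \<cdot>\<^sub>m D \<in> commutant n d m W"
      unfolding commutant_def comm[of x] using cc by (intro CollectI exI[of _ "\<lambda>k. Pk k + of_real x \<cdot>\<^sub>m E k"] conjI refl)
    then show ?thesis unfolding C_set_def using that pt by blast
  qed
  have C1: "R + of_real e \<cdot>\<^sub>m D \<in> C_set dK dH n d m W K0"
    by (rule inC) (use psd1 R1 N_def in simp)
  have C2: "R + of_real (-e) \<cdot>\<^sub>m D \<in> C_set dK dH n d m W K0"
    by (rule inC) (use psd2 R2 mD N_def in simp)
  have half: "R = of_real (1/2) \<cdot>\<^sub>m (R + of_real e \<cdot>\<^sub>m D) + of_real (1 - 1/2) \<cdot>\<^sub>m (R + of_real (-e) \<cdot>\<^sub>m D)"
  proof (rule eq_matI)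
    fix i j assume "i < dim_row (of_real (1/2) \<cdot>\<^sub>m (R + of_real e \<cdot>\<^sub>m D) + of_real (1 - 1/2) \<cdot>\<^sub>m (R + of_real (-e) \<cdot>\<^sub>m D))"
      "j < dim_col (of_real (1/2) \<cdot>\<^sub>m (R + of_real e \<cdot>\<^sub>m D) + of_real (1 - 1/2) \<cdot>\<^sub>m (R + of_real (-e) \<cdot>\<^sub>m D))"
    then have i: "i < N" and j: "j < N" using Rc Dc by auto
    show "R $$ (i,j) = (of_real (1/2) \<cdot>\<^sub>m (R + of_real e \<cdot>\<^sub>m D) + of_real (1 - 1/2) \<cdot>\<^sub>m (R + of_real (-e) \<cdot>\<^sub>m D)) $$ (i,j)"
      using i j Rc Dc by (simp add: algebra_simps)
  qed (use Rc Dc in auto)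
  have ep: "extreme_point (C_set dK dH n d m W K0) R" using assms(8) unfolding R_def Xb_def .
  then have H: "\<forall>R1\<in>C_set dK dH n d m W K0. \<forall>R2\<in>C_set dK dH n d m W K0. \<forall>t::real. 0 < t \<and> t < 1 \<and> R = of_real t \<cdot>\<^sub>m R1 + of_real (1 - t) \<cdot>\<^sub>m R2
        \<longrightarrow> R1 = R \<and> R2 = R" unfolding extreme_point_def by (elim conjE)
  have t: "0 < (1/2::real) \<and> (1/2::real) < 1 \<and> R = of_real (1/2) \<cdot>\<^sub>m (R + of_real e \<cdot>\<^sub>m D) + of_real (1 - 1/2) \<cdot>\<^sub>m (R + of_real (-e) \<cdot>\<^sub>m D)"
    by (intro conjI) (simp, simp, rule half)
  have "R + of_real e \<cdot>\<^sub>m D = R \<and> R + of_real (-e) \<cdot>\<^sub>m D = R" by (rule H[rule_format, OF C1 C2 t])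
  then have "R + of_real e \<cdot>\<^sub>m D = R" by (elim conjE)
  then have D0: "D = 0\<^sub>m N N"
  proof -
    assume h: "R + of_real e \<cdot>\<^sub>m D = R"
    show ?thesis
    proof (rule eq_matI)
      fix i j assume "i < dim_row (0\<^sub>m N N)" "j < dim_col (0\<^sub>m N N)"
      then have i: "i < N" and j: "j < N" by auto
      have "(R + of_real e \<cdot>\<^sub>m D) $$ (i,j) = R $$ (i,j)" using h by simp
      then have "of_real e * D $$ (i,j) = 0" using i j Rc Dc by simp
      then show "D $$ (i,j) = 0\<^sub>m N N $$ (i,j)" using e0 i j by simp
    qed (use Dc in auto)
  qed
  have "E k0 = 0\<^sub>m (m k0) (m k0)"
    by (rule ce_zero_imp[OF Nsum W WW WW' Ec dpos D0[unfolded D_def] k0])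
  then show False using Enz unfolding E_def by simp
qed

end
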